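(* Let $R>0$ and positive integers $d,k,T$. Consider the contextual combinatorial semi-bandit instance with $N=k2^d$ arms in which, for every $t\in[T]$ and every $s\in[k]$, the feature vectors $\{x_t(i)\}_{i=(s-1)2^d+1}^{s2^d}$ enumerate the $2^d$ vertices $\{-1,1\}^d$, the feasible family is $S_t=\{I\subseteq[k2^d]:|I|=k\}$, and the noises $\eta_t(i)\sim\mathcal{N}(0,R^2)$ are independent. Let $\Theta=\{-R/\sqrt{kT},\,R/\sqrt{kT}\}^d$. Then for any algorithm there exists $\theta^*\in\Theta$ such that $R(T)=\Omega(Rd\sqrt{kT})$.
   Context: In each round $t\in[T]$ the learner observes the feature vectors $x_t(i)$ and $S_t$, chooses $I_t\in S_t$, and observes rewards $r_t(i)={\theta^*}^\top x_t(i)+\eta_t(i)$ for $i\in I_t$. The (expected) regret is $R(T)=\sum_{t=1}^T\big(\sum_{i\in I_t^*}{\theta^*}^\top x_t(i)-\sum_{i\in I_t}{\theta^*}^\top x_t(i)\big)$ with $I_t^*\in\arg\max_{I\in S_t}\sum_{i\in I}{\theta^*}^\top x_t(i)$. *)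

theory Defs
  imports "HOL-Probability.Probability"
begin

text \<open>Conventions: rounds are indexed by t in {0..<T}, arms by i in {0..<k*2^d},
  coordinates by j in {0..<d}. Vectors in R^d are functions nat => real that vanish
  outside {0..<d}. Arm s*2^d + j (s < k, j < 2^d) is the j-th arm of block s.\<close>

definition cube :: "nat \<Rightarrow> (nat \<Rightarrow> real) set" where
  "cube d = {v. (\<forall>j<d. v j = -1 \<or> v j = 1) \<and> (\<forall>j\<ge>d. v j = 0)}"

definition Theta :: "real \<Rightarrow> nat \<Rightarrow> nat \<Rightarrow> nat \<Rightarrow> (nat \<Rightarrow> real) set" where
  "Theta R d k T = {\<theta>. (\<forall>j<d. \<theta> j = - (R / sqrt (real k * real T)) \<or> \<theta> j = R / sqrt (real k * real T))
                     \<and> (\<forall>j\<ge>d. \<theta> j = 0)}"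

definition inst_features :: "nat \<Rightarrow> nat \<Rightarrow> nat \<Rightarrow> (nat \<Rightarrow> nat \<Rightarrow> nat \<Rightarrow> real) \<Rightarrow> bool" where
  "inst_features d k T x \<longleftrightarrow>
     (\<forall>t<T. \<forall>s<k. bij_betw (\<lambda>j. x t (s * 2^d + j)) {..<2^d} (cube d))"

definition feasible :: "nat \<Rightarrow> nat \<Rightarrow> nat set set" where
  "feasible N k = {I. I \<subseteq> {..<N} \<and> card I = k}"

definition mean_reward :: "(nat \<Rightarrow> real) \<Rightarrow> nat \<Rightarrow> (nat \<Rightarrow> nat \<Rightarrow> nat \<Rightarrow> real) \<Rightarrow> nat \<Rightarrow> nat \<Rightarrow> real" where
  "mean_reward \<theta> d x t i = (\<Sum>j<d. \<theta> j * x t i j)"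

text \<open>A history is the list of past (chosen set, observed rewards) pairs; the observed
  reward function is masked to 0 outside the chosen set.\<close>
type_synonym history = "(nat set \<times> (nat \<Rightarrow> real)) list"

text \<open>A (possibly randomised) policy: internal random seed u, round t, history \<Rightarrow> chosen set.
  The noise eta (t,i) is pre-sampled for all rounds and arms; only the entries of
  chosen arms are revealed.\<close>
fun hist :: "(real \<Rightarrow> nat \<Rightarrow> history \<Rightarrow> nat set) \<Rightarrow> (nat \<Rightarrow> real) \<Rightarrow> nat
      \<Rightarrow> (nat \<Rightarrow> nat \<Rightarrow> nat \<Rightarrow> real) \<Rightarrow> real \<Rightarrow> (nat \<times> nat \<Rightarrow> real) \<Rightarrow> nat \<Rightarrow> history" where
  "hist \<pi> \<theta> d x u \<eta> 0 = []"
| "hist \<pi> \<theta> d x u \<eta> (Suc t) =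
     (let h = hist \<pi> \<theta> d x u \<eta> t; I = \<pi> u t h
      in h @ [(I, \<lambda>i. if i \<in> I then mean_reward \<theta> d x t i + \<eta> (t, i) else 0)])"

definition chosen :: "(real \<Rightarrow> nat \<Rightarrow> history \<Rightarrow> nat set) \<Rightarrow> (nat \<Rightarrow> real) \<Rightarrow> nat
      \<Rightarrow> (nat \<Rightarrow> nat \<Rightarrow> nat \<Rightarrow> real) \<Rightarrow> real \<Rightarrow> (nat \<times> nat \<Rightarrow> real) \<Rightarrow> nat \<Rightarrow> nat set" where
  "chosen \<pi> \<theta> d x u \<eta> t = \<pi> u t (hist \<pi> \<theta> d x u \<eta> t)"

definition sample_space :: "real measure \<Rightarrow> real \<Rightarrow> nat \<Rightarrow> nat \<Rightarrow> (real \<times> (nat \<times> nat \<Rightarrow> real)) measure" where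
  "sample_space U R T N =
     U \<Otimes>\<^sub>M (PiM ({..<T} \<times> {..<N}) (\<lambda>_. density lborel (normal_density 0 R)))"

definition regret :: "(real \<Rightarrow> nat \<Rightarrow> history \<Rightarrow> nat set) \<Rightarrow> (nat \<Rightarrow> real) \<Rightarrow> nat \<Rightarrow> nat
      \<Rightarrow> (nat \<Rightarrow> nat \<Rightarrow> nat \<Rightarrow> real) \<Rightarrow> real \<Rightarrow> (nat \<times> nat \<Rightarrow> real) \<Rightarrow> nat \<Rightarrow> real" where
  "regret \<pi> \<theta> d k x u \<eta> T =
     (\<Sum>t<T. Max ((\<lambda>I. \<Sum>i\<in>I. mean_reward \<theta> d x t i) ` feasible (k * 2^d) k)
            - (\<Sum>i\<in>chosen \<pi> \<theta> d x u \<eta> t. mean_reward \<theta> d x t i))"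

definition expected_regret :: "real measure \<Rightarrow> real \<Rightarrow> (real \<Rightarrow> nat \<Rightarrow> history \<Rightarrow> nat set)
      \<Rightarrow> (nat \<Rightarrow> real) \<Rightarrow> nat \<Rightarrow> nat \<Rightarrow> (nat \<Rightarrow> nat \<Rightarrow> nat \<Rightarrow> real) \<Rightarrow> nat \<Rightarrow> real" where
  "expected_regret U R \<pi> \<theta> d k x T =
     (\<integral>\<omega>. regret \<pi> \<theta> d k x (fst \<omega>) (snd \<omega>) T \<partial>(sample_space U R T (k * 2^d)))"

end

theory Submission
  imports Defs
begin


definition gauss :: "real \<Rightarrow> real measure" where
  "gauss R = density lborel (normal_density 0 R)"

lemma prob_space_gauss: "R > 0 \<Longrightarrow> prob_space (gauss R)"
  unfolding gauss_def by (rule prob_space_normal_density)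

lemma space_gauss[simp]: "space (gauss R) = UNIV"
  unfolding gauss_def by simp

lemma sets_gauss[simp]: "sets (gauss R) = sets borel"
  unfolding gauss_def by simp

lemma shift_1d:
  fixes R c :: real and g :: "real \<Rightarrow> ennreal"
  assumes R: "R > 0" and g[measurable]: "g \<in> borel_measurable borel"
  shows "(\<integral>\<^sup>+y. g (y - c) * ennreal (exp ((2*c*y - c^2)/(2*R^2))) \<partial>gauss R) = (\<integral>\<^sup>+y. g y \<partial>gauss R)"
proof -
  have eq: "normal_density 0 R y * exp ((2*c*y - c^2)/(2*R^2)) = normal_density 0 R (y - c)" for y
  proof -
    have "exp (-(y - 0)\<^sup>2/ (2 * R\<^sup>2)) * exp ((2*c*y - c^2)/(2*R^2)) = exp (-((y - c) - 0)\<^sup>2/ (2 * R\<^sup>2))"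
      unfolding exp_add[symmetric] using R by (intro arg_cong[where f=exp]) (simp add: field_simps power2_eq_square)
    then show ?thesis unfolding normal_density_def by (simp add: mult.assoc)
  qed
  have "(\<integral>\<^sup>+y. g (y - c) * ennreal (exp ((2*c*y - c^2)/(2*R^2))) \<partial>gauss R)
      = (\<integral>\<^sup>+y. ennreal (normal_density 0 R y) * (g (y - c) * ennreal (exp ((2*c*y - c^2)/(2*R^2)))) \<partial>lborel)"
    unfolding gauss_def by (subst nn_integral_density) auto
  also have "\<dots> = (\<integral>\<^sup>+y. ennreal (normal_density 0 R (y - c)) * g (y - c) \<partial>lborel)"
    apply (rule nn_integral_cong)
    apply (subst eq[symmetric])
    by (simp add: ennreal_mult' mult_ac)
  also have "\<dots> = (\<integral>\<^sup>+y. ennreal (normal_density 0 R y) * g y \<partial>lborel)"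
    using nn_integral_real_affine[of "\<lambda>y. ennreal (normal_density 0 R y) * g y" 1 "-c"] by simp
  also have "\<dots> = (\<integral>\<^sup>+y. g y \<partial>gauss R)"
    unfolding gauss_def by (subst nn_integral_density) auto
  finally show ?thesis .
qed


lemma product_prob_space_gauss: "R > 0 \<Longrightarrow> product_prob_space (\<lambda>_::'i. gauss R)"
  unfolding product_prob_space_def product_prob_space_axioms_def product_sigma_finite_def
  using prob_space_gauss prob_space_imp_sigma_finite by blast

lemma coord_shift:
  fixes R c :: real and I :: "'i set" and a :: 'i and b :: "('i \<Rightarrow> real) \<Rightarrow> bool"
  defines "P \<equiv> PiM I (\<lambda>_. gauss R)"
  assumes R: "R > 0" and fin: "finite I" and aI: "a \<in> I"
    and b_indep: "\<And>\<eta> z. b (\<eta>(a := z)) = b \<eta>"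
    and b_meas: "{\<eta> \<in> space P. b \<eta>} \<in> sets P"
    and F[measurable]: "F \<in> borel_measurable P"
  shows "(\<integral>\<^sup>+\<eta>. F (if b \<eta> then \<eta>(a := \<eta> a - c) else \<eta>)
             * ennreal (if b \<eta> then exp ((2*c*\<eta> a - c^2)/(2*R^2)) else 1) \<partial>P) = integral\<^sup>N P F"
proof -
  interpret product_prob_space "\<lambda>_::'i. gauss R" I using product_prob_space_gauss[OF R] .
  let ?J = "I - {a}"
  have IJ: "I = insert a ?J" using aI by auto
  have finJ: "finite ?J" using fin by auto
  have upd_meas: "(\<lambda>\<eta>. \<eta>(a := \<eta> a - c)) \<in> measurable P P"
    unfolding P_def
  proof (rule measurable_fun_upd[where J=I])
    show "(\<lambda>x. x a - c) \<in> measurable (PiM I (\<lambda>_. gauss R)) (gauss R)"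
    proof -
      have "(\<lambda>x. x a) \<in> measurable (PiM I (\<lambda>_. gauss R)) (gauss R)"
        by (rule measurable_component_singleton[OF aI])
      then have "(\<lambda>x. x a) \<in> borel_measurable (PiM I (\<lambda>_. gauss R))"
        unfolding measurable_cong_sets[OF refl sets_gauss] .
      then show ?thesis unfolding measurable_cong_sets[OF refl sets_gauss] by measurable
    qed
  qed (use aI in auto)
  have sh_meas: "(\<lambda>\<eta>. if b \<eta> then \<eta>(a := \<eta> a - c) else \<eta>) \<in> measurable P P"
    by (rule measurable_If[OF upd_meas _ b_meas]) simp
  have ex_meas: "(\<lambda>\<eta>. ennreal (if b \<eta> then exp ((2*c*\<eta> a - c^2)/(2*R^2)) else 1)) \<in> borel_measurable P"
  proof -
    have "(\<lambda>x. x a) \<in> measurable P (gauss R)"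
      unfolding P_def by (rule measurable_component_singleton[OF aI])
    then have [measurable]: "(\<lambda>x. x a) \<in> borel_measurable P"
      unfolding measurable_cong_sets[OF refl sets_gauss] .
    have "(\<lambda>\<eta>. if b \<eta> then exp ((2*c*\<eta> a - c^2)/(2*R^2)) else 1) \<in> borel_measurable P"
      by (rule measurable_If[OF _ _ b_meas]) auto
    then show ?thesis by simp
  qed
  have L_meas: "(\<lambda>\<eta>. F (if b \<eta> then \<eta>(a := \<eta> a - c) else \<eta>)
             * ennreal (if b \<eta> then exp ((2*c*\<eta> a - c^2)/(2*R^2)) else 1)) \<in> borel_measurable (PiM (insert a ?J) (\<lambda>_. gauss R))"
    using measurable_compose[OF sh_meas F] ex_meas unfolding P_def IJ[symmetric] by measurable
  have F': "F \<in> borel_measurable (PiM (insert a ?J) (\<lambda>_. gauss R))" using F unfolding P_def IJ[symmetric] .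
  have "(\<integral>\<^sup>+\<eta>. F (if b \<eta> then \<eta>(a := \<eta> a - c) else \<eta>)
             * ennreal (if b \<eta> then exp ((2*c*\<eta> a - c^2)/(2*R^2)) else 1) \<partial>P)
     = (\<integral>\<^sup>+x. (\<integral>\<^sup>+y. F (if b (x(a:=y)) then (x(a:=y))(a := (x(a:=y)) a - c) else x(a:=y))
             * ennreal (if b (x(a:=y)) then exp ((2*c*(x(a:=y)) a - c^2)/(2*R^2)) else 1) \<partial>gauss R) \<partial>PiM ?J (\<lambda>_. gauss R))"
    unfolding P_def by (subst IJ) (rule product_nn_integral_insert[OF finJ _ L_meas], simp)
  also have "\<dots> = (\<integral>\<^sup>+x. (\<integral>\<^sup>+y. F (x(a:=y)) \<partial>gauss R) \<partial>PiM ?J (\<lambda>_. gauss R))"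
  proof (rule nn_integral_cong)
    fix x assume x: "x \<in> space (PiM ?J (\<lambda>_. gauss R))"
    have gm: "(\<lambda>y. F (x(a:=y))) \<in> borel_measurable borel"
      using measurable_comp[OF measurable_component_update F', OF x]
      unfolding comp_def measurable_cong_sets[OF sets_gauss refl] by simp
    show "(\<integral>\<^sup>+y. F (if b (x(a:=y)) then (x(a:=y))(a := (x(a:=y)) a - c) else x(a:=y))
             * ennreal (if b (x(a:=y)) then exp ((2*c*(x(a:=y)) a - c^2)/(2*R^2)) else 1) \<partial>gauss R)
        = (\<integral>\<^sup>+y. F (x(a:=y)) \<partial>gauss R)"
    proof (cases "b x")
      case True
      then show ?thesis using b_indep shift_1d[OF R gm, of c] by simp
    next
      case False
      then show ?thesis using b_indep by simp
    qed
  qed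
  also have "\<dots> = integral\<^sup>N P F"
    unfolding P_def by (subst (2) IJ) (rule product_nn_integral_insert[OF finJ _ F', symmetric], simp)
  finally show ?thesis .
qed


definition shiftJ :: "'i set \<Rightarrow> ('i \<Rightarrow> ('i \<Rightarrow> real) \<Rightarrow> bool) \<Rightarrow> ('i \<Rightarrow> real) \<Rightarrow> ('i \<Rightarrow> real) \<Rightarrow> ('i \<Rightarrow> real)" where
  "shiftJ J b c \<eta> = (\<lambda>x. if x \<in> J \<and> b x \<eta> then \<eta> x - c x else \<eta> x)"

definition rhoJ :: "real \<Rightarrow> 'i set \<Rightarrow> ('i \<Rightarrow> ('i \<Rightarrow> real) \<Rightarrow> bool) \<Rightarrow> ('i \<Rightarrow> real) \<Rightarrow> ('i \<Rightarrow> real) \<Rightarrow> real" where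
  "rhoJ R J b c \<eta> = (\<Prod>x\<in>J. if b x \<eta> then exp ((2 * c x * \<eta> x - (c x)^2)/(2*R^2)) else 1)"

lemma rhoJ_pos: "rhoJ R J b c \<eta> > 0"
  unfolding rhoJ_def by (rule prod_pos) auto

lemma comp_meas_gauss:
  assumes "x \<in> I" shows "(\<lambda>\<eta>. \<eta> x) \<in> borel_measurable (PiM I (\<lambda>_. gauss R))"
proof -
  have "(\<lambda>\<eta>. \<eta> x) \<in> measurable (PiM I (\<lambda>_. gauss R)) (gauss R)"
    by (rule measurable_component_singleton[OF assms])
  then show ?thesis unfolding measurable_cong_sets[OF refl sets_gauss] .
qed

lemma shiftJ_meas:
  assumes JI: "J \<subseteq> I" and b_meas: "\<And>x. x \<in> J \<Longrightarrow> {\<eta> \<in> space (PiM I (\<lambda>_. gauss R)). b x \<eta>} \<in> sets (PiM I (\<lambda>_. gauss R))"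
  shows "shiftJ J b c \<in> measurable (PiM I (\<lambda>_. gauss R)) (PiM I (\<lambda>_. gauss R))"
proof -
  have "(\<lambda>\<eta> x. (\<lambda>x \<eta>. if x \<in> J \<and> b x \<eta> then \<eta> x - c x else \<eta> x) x \<eta>) \<in> measurable (PiM I (\<lambda>_. gauss R)) (PiM I (\<lambda>_. gauss R))"
  proof (rule measurable_PiM_single')
    fix x assume x: "x \<in> I"
    note cm[measurable] = comp_meas_gauss[OF x, of R]
    show "(\<lambda>\<eta>. if x \<in> J \<and> b x \<eta> then \<eta> x - c x else \<eta> x) \<in> measurable (PiM I (\<lambda>_. gauss R)) (gauss R)"
      unfolding measurable_cong_sets[OF refl sets_gauss]
    proof (cases "x \<in> J")
      case True
      show "(\<lambda>\<eta>. if x \<in> J \<and> b x \<eta> then \<eta> x - c x else \<eta> x) \<in> borel_measurable (PiM I (\<lambda>_. gauss R))"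
        using True by simp (rule measurable_If[OF _ _ b_meas[OF True]]; simp)
    qed simp
  next
    show "(\<lambda>\<eta> x. if x \<in> J \<and> b x \<eta> then \<eta> x - c x else \<eta> x) \<in> space (PiM I (\<lambda>_. gauss R)) \<rightarrow> (\<Pi>\<^sub>E i\<in>I. space (gauss R))"
      using JI by (auto simp: space_PiM PiE_def extensional_def)
  qed
  then show ?thesis unfolding shiftJ_def[abs_def] by simp
qed

lemma rhoJ_meas:
  assumes JI: "J \<subseteq> I" and b_meas: "\<And>x. x \<in> J \<Longrightarrow> {\<eta> \<in> space (PiM I (\<lambda>_. gauss R)). b x \<eta>} \<in> sets (PiM I (\<lambda>_. gauss R))"
  shows "rhoJ R J b c \<in> borel_measurable (PiM I (\<lambda>_. gauss R))"
  unfolding rhoJ_def[abs_def]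
proof (rule borel_measurable_prod)
  fix x assume x: "x \<in> J"
  note cm[measurable] = comp_meas_gauss[of x I R]
  show "(\<lambda>\<eta>. if b x \<eta> then exp ((2 * c x * \<eta> x - (c x)^2)/(2*R^2)) else 1) \<in> borel_measurable (PiM I (\<lambda>_. gauss R))"
    by (rule measurable_If[OF _ _ b_meas[OF x]]) (use x JI in auto)
qed

lemma set_shift:
  fixes R :: real and I J :: "'i set"
  defines "P \<equiv> PiM I (\<lambda>_. gauss R)"
  assumes R: "R > 0" and fin: "finite I" and JI: "J \<subseteq> I"
    and indep: "\<And>x \<eta> \<eta>'. x \<in> J \<Longrightarrow> (\<And>y. y \<notin> J \<Longrightarrow> \<eta> y = \<eta>' y) \<Longrightarrow> b x \<eta> = b x \<eta>'"
    and b_meas: "\<And>x. x \<in> J \<Longrightarrow> {\<eta> \<in> space P. b x \<eta>} \<in> sets P"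
    and F: "F \<in> borel_measurable P"
  shows "(\<integral>\<^sup>+\<eta>. F (shiftJ J b c \<eta>) * ennreal (rhoJ R J b c \<eta>) \<partial>P) = integral\<^sup>N P F"
proof -
  have "finite J" using fin JI finite_subset by blast
  then show ?thesis using JI indep b_meas F
  proof (induction J arbitrary: F)
    case empty
    then show ?case by (simp add: shiftJ_def rhoJ_def)
  next
    case (insert a J F)
    have aI: "a \<in> I" using insert.prems(1) by auto
    have JI': "J \<subseteq> I" using insert.prems(1) by auto
    let ?Sa = "\<lambda>\<xi>. if b a \<xi> then \<xi>(a := \<xi> a - c a) else \<xi>"
    let ?ra = "\<lambda>\<xi>. if b a \<xi> then exp ((2*c a*\<xi> a - (c a)^2)/(2*R^2)) else 1"
    have Sa_eq: "?Sa = shiftJ {a} b c" by (auto simp: shiftJ_def fun_eq_iff)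
    have ba_meas: "{\<eta> \<in> space P. b a \<eta>} \<in> sets P" by (rule insert.prems(3)) simp
    have Sa_meas: "?Sa \<in> measurable P P"
      unfolding Sa_eq P_def by (rule shiftJ_meas) (use aI ba_meas in \<open>auto simp: P_def\<close>)
    have ra_meas: "?ra \<in> borel_measurable P"
      by (rule measurable_If[OF _ _ ba_meas]) (use aI comp_meas_gauss[of a I R] in \<open>auto simp: P_def\<close>)
    define G where "G = (\<lambda>\<xi>. F (?Sa \<xi>) * ennreal (?ra \<xi>))"
    have G_meas: "G \<in> borel_measurable P"
      unfolding G_def using measurable_compose[OF Sa_meas insert.prems(4)] ra_meas by measurable
    have ba_inv: "b a (shiftJ J b c \<eta>) = b a \<eta>" for \<eta>
      by (rule insert.prems(2)) (auto simp: shiftJ_def)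
    have key: "G (shiftJ J b c \<eta>) * ennreal (rhoJ R J b c \<eta>)
       = F (shiftJ (insert a J) b c \<eta>) * ennreal (rhoJ R (insert a J) b c \<eta>)" for \<eta>
    proof -
      have "?Sa (shiftJ J b c \<eta>) = shiftJ (insert a J) b c \<eta>"
        using ba_inv[of \<eta>] insert.hyps(2) by (auto simp: shiftJ_def fun_eq_iff)
      moreover have "?ra (shiftJ J b c \<eta>) = ?ra \<eta>"
        using ba_inv[of \<eta>] insert.hyps(2) by (simp add: shiftJ_def)
      moreover have "rhoJ R (insert a J) b c \<eta> = ?ra \<eta> * rhoJ R J b c \<eta>"
        unfolding rhoJ_def using insert.hyps by simp
      ultimately show ?thesis unfolding G_def
        by (simp add: ennreal_mult' rhoJ_pos less_imp_le mult_ac)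
    qed
    have "(\<integral>\<^sup>+\<eta>. F (shiftJ (insert a J) b c \<eta>) * ennreal (rhoJ R (insert a J) b c \<eta>) \<partial>P)
        = (\<integral>\<^sup>+\<eta>. G (shiftJ J b c \<eta>) * ennreal (rhoJ R J b c \<eta>) \<partial>P)"
      using key by simp
    also have "\<dots> = integral\<^sup>N P G"
    proof (rule insert.IH)
      show "J \<subseteq> I" by fact
      show "\<And>x \<eta> \<eta>'. x \<in> J \<Longrightarrow> (\<And>y. y \<notin> J \<Longrightarrow> \<eta> y = \<eta>' y) \<Longrightarrow> b x \<eta> = b x \<eta>'"
        using insert.prems(2) by (metis insertCI)
      show "\<And>x. x \<in> J \<Longrightarrow> {\<eta> \<in> space P. b x \<eta>} \<in> sets P" using insert.prems(3) by auto
      show "G \<in> borel_measurable P" by fact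
    qed
    also have "\<dots> = integral\<^sup>N P F"
      unfolding G_def P_def
    proof (rule coord_shift[OF R fin aI])
      show "\<And>\<eta> z. b a (\<eta>(a := z)) = b a \<eta>"
        by (rule insert.prems(2)) auto
      show "{\<eta> \<in> space (PiM I (\<lambda>_. gauss R)). b a \<eta>} \<in> sets (PiM I (\<lambda>_. gauss R))"
        using ba_meas by (simp add: P_def)
      show "F \<in> borel_measurable (PiM I (\<lambda>_. gauss R))" using insert.prems(4) by (simp add: P_def)
    qed
    finally show ?case .
  qed
qed


definition bsel :: "(('a \<Rightarrow> real) \<Rightarrow> nat \<Rightarrow> nat set) \<Rightarrow> nat \<times> nat \<Rightarrow> ('a \<Rightarrow> real) \<Rightarrow> bool" where
  "bsel S p \<eta> = (snd p \<in> S \<eta> (fst p))"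

definition Lam :: "real \<Rightarrow> nat \<Rightarrow> ((nat \<times> nat \<Rightarrow> real) \<Rightarrow> nat \<Rightarrow> nat set) \<Rightarrow> (nat \<times> nat \<Rightarrow> real) \<Rightarrow> nat \<Rightarrow> (nat \<times> nat \<Rightarrow> real) \<Rightarrow> real" where
  "Lam R N S c n \<eta> = (\<Prod>t<n. rhoJ R ({t} \<times> {..<N}) (bsel S) c \<eta>)"

lemma Lam_pos: "Lam R N S c n \<eta> > 0"
  unfolding Lam_def by (rule prod_pos) (auto intro: rhoJ_pos)

lemma bsel_meas:
  assumes S_meas: "\<And>t. t < T \<Longrightarrow> (\<lambda>\<eta>. S \<eta> t) \<in> measurable (PiM ({..<T} \<times> {..<N}) (\<lambda>_. gauss R)) (count_space UNIV)"
    and p: "fst p < T"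
  shows "{\<eta> \<in> space (PiM ({..<T} \<times> {..<N}) (\<lambda>_. gauss R)). bsel S p \<eta>} \<in> sets (PiM ({..<T} \<times> {..<N}) (\<lambda>_. gauss R))"
proof -
  have "(\<lambda>\<eta>. S \<eta> (fst p)) -` {A. snd p \<in> A} \<inter> space (PiM ({..<T} \<times> {..<N}) (\<lambda>_. gauss R)) \<in> sets (PiM ({..<T} \<times> {..<N}) (\<lambda>_. gauss R))"
    by (rule measurable_sets[OF S_meas[OF p]]) simp
  moreover have "(\<lambda>\<eta>. S \<eta> (fst p)) -` {A. snd p \<in> A} \<inter> space (PiM ({..<T} \<times> {..<N}) (\<lambda>_. gauss R))
     = {\<eta> \<in> space (PiM ({..<T} \<times> {..<N}) (\<lambda>_. gauss R)). bsel S p \<eta>}"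
    by (auto simp: bsel_def)
  ultimately show ?thesis by simp
qed

lemma adaptive_shift:
  fixes R :: real and T N :: nat and S :: "(nat \<times> nat \<Rightarrow> real) \<Rightarrow> nat \<Rightarrow> nat set" and c :: "nat \<times> nat \<Rightarrow> real"
  defines "P \<equiv> PiM ({..<T} \<times> {..<N}) (\<lambda>_. gauss R)"
  assumes R: "R > 0"
    and S_adapt: "\<And>t \<eta> \<eta>'. (\<And>s i. s < t \<Longrightarrow> \<eta> (s,i) = \<eta>' (s,i)) \<Longrightarrow> S \<eta> t = S \<eta>' t"
    and S_meas: "\<And>t. t < T \<Longrightarrow> (\<lambda>\<eta>. S \<eta> t) \<in> measurable P (count_space UNIV)"
    and n: "n \<le> T"
    and h: "h \<in> borel_measurable P"
  shows "(\<integral>\<^sup>+\<eta>. h (shiftJ ({..<n} \<times> {..<N}) (bsel S) c \<eta>) * ennreal (Lam R N S c n \<eta>) \<partial>P) = integral\<^sup>N P h"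
  using n h
proof (induction n arbitrary: h)
  case 0
  then show ?case by (simp add: shiftJ_def Lam_def)
next
  case (Suc n h)
  have finI: "finite ({..<T} \<times> {..<N})" by simp
  have bm: "{\<eta> \<in> space P. bsel S p \<eta>} \<in> sets P" if "fst p < T" for p
    unfolding P_def by (rule bsel_meas[OF S_meas[unfolded P_def] that])
  let ?Jn = "{..<n} \<times> {..<N}"
  let ?Kn = "{n} \<times> {..<N}"
  have adapt_b: "bsel S p \<eta> = bsel S p \<eta>'" if "\<And>s i. s < fst p \<Longrightarrow> \<eta> (s,i) = \<eta>' (s,i)" for p \<eta> \<eta>'
    unfolding bsel_def using S_adapt[of "fst p" \<eta> \<eta>'] that by simp
  have Psi_meas: "shiftJ ?Jn (bsel S) c \<in> measurable P P"
    unfolding P_def by (rule shiftJ_meas) (use Suc.prems(1) bm in \<open>auto simp: P_def\<close>)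
  have rho_meas: "rhoJ R ({t} \<times> {..<N}) (bsel S) c \<in> borel_measurable P" if "t < T" for t
    unfolding P_def by (rule rhoJ_meas) (use that bm in \<open>auto simp: P_def\<close>)
  have Lam_meas: "Lam R N S c n \<in> borel_measurable P"
    unfolding Lam_def[abs_def] by (rule borel_measurable_prod) (use rho_meas Suc.prems(1) in auto)
  define G where "G = (\<lambda>\<xi>. h (shiftJ ?Jn (bsel S) c \<xi>) * ennreal (Lam R N S c n \<xi>))"
  have G_meas: "G \<in> borel_measurable P"
    unfolding G_def using measurable_compose[OF Psi_meas Suc.prems(2)] Lam_meas by measurable
  have key: "G (shiftJ ?Kn (bsel S) c \<eta>) * ennreal (rhoJ R ?Kn (bsel S) c \<eta>)
     = h (shiftJ ({..<Suc n} \<times> {..<N}) (bsel S) c \<eta>) * ennreal (Lam R N S c (Suc n) \<eta>)" for \<eta>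
  proof -
    have agree: "shiftJ ?Kn (bsel S) c \<eta> (s,i) = \<eta> (s,i)" if "s < n" for s i
      using that by (simp add: shiftJ_def)
    have b_inv: "bsel S (t,i) (shiftJ ?Kn (bsel S) c \<eta>) = bsel S (t,i) \<eta>" if "t \<le> n" for t i
      by (rule adapt_b) (use that in \<open>auto simp: shiftJ_def\<close>)
    have "shiftJ ?Jn (bsel S) c (shiftJ ?Kn (bsel S) c \<eta>) = shiftJ ({..<Suc n} \<times> {..<N}) (bsel S) c \<eta>"
    proof
      fix p :: "nat \<times> nat"
      obtain t i where p: "p = (t,i)" by force
      show "shiftJ ?Jn (bsel S) c (shiftJ ?Kn (bsel S) c \<eta>) p = shiftJ ({..<Suc n} \<times> {..<N}) (bsel S) c \<eta> p"
        unfolding p using b_inv[of t i] by (cases "t < n"; cases "t = n") (auto simp: shiftJ_def)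
    qed
    moreover have "Lam R N S c n (shiftJ ?Kn (bsel S) c \<eta>) = Lam R N S c n \<eta>"
      unfolding Lam_def rhoJ_def
      by (intro prod.cong refl) (auto simp: b_inv[unfolded shiftJ_def] shiftJ_def)
    moreover have "Lam R N S c (Suc n) \<eta> = Lam R N S c n \<eta> * rhoJ R ?Kn (bsel S) c \<eta>"
      unfolding Lam_def by simp
    ultimately show ?thesis unfolding G_def
      by (simp add: ennreal_mult' rhoJ_pos Lam_pos less_imp_le mult_ac)
  qed
  have "(\<integral>\<^sup>+\<eta>. h (shiftJ ({..<Suc n} \<times> {..<N}) (bsel S) c \<eta>) * ennreal (Lam R N S c (Suc n) \<eta>) \<partial>P)
      = (\<integral>\<^sup>+\<eta>. G (shiftJ ?Kn (bsel S) c \<eta>) * ennreal (rhoJ R ?Kn (bsel S) c \<eta>) \<partial>P)"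
    by (simp only: key)
  also have "\<dots> = integral\<^sup>N P G"
    unfolding P_def
  proof (rule set_shift[OF R finI])
    show "?Kn \<subseteq> {..<T} \<times> {..<N}" using Suc.prems(1) by auto
    show "bsel S x \<eta> = bsel S x \<eta>'" if "x \<in> ?Kn" "\<And>y. y \<notin> ?Kn \<Longrightarrow> \<eta> y = \<eta>' y" for x \<eta> \<eta>'
      by (rule adapt_b) (use that in auto)
    show "{\<eta> \<in> space (PiM ({..<T} \<times> {..<N}) (\<lambda>_. gauss R)). bsel S x \<eta>} \<in> sets (PiM ({..<T} \<times> {..<N}) (\<lambda>_. gauss R))"
      if "x \<in> ?Kn" for x using bm[of x] that Suc.prems(1) by (auto simp: P_def)
    show "G \<in> borel_measurable (PiM ({..<T} \<times> {..<N}) (\<lambda>_. gauss R))" using G_meas by (simp add: P_def)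
  qed
  also have "\<dots> = integral\<^sup>N P h"
    unfolding G_def by (rule Suc.IH) (use Suc.prems in auto)
  finally show ?case .
qed



lemma hist_adapt:
  "(\<And>s i. s < t \<Longrightarrow> \<eta> (s,i) = \<eta>' (s,i)) \<Longrightarrow> hist \<pi> \<theta> d x u \<eta> t = hist \<pi> \<theta> d x u \<eta>' t"
proof (induction t)
  case 0 then show ?case by simp
next
  case (Suc t)
  have "hist \<pi> \<theta> d x u \<eta> t = hist \<pi> \<theta> d x u \<eta>' t" using Suc by simp
  moreover have "\<eta> (t,i) = \<eta>' (t,i)" for i using Suc.prems by simp
  ultimately show ?case by (simp add: Let_def fun_eq_iff)
qed

lemma chosen_adapt:
  "(\<And>s i. s < t \<Longrightarrow> \<eta> (s,i) = \<eta>' (s,i)) \<Longrightarrow> chosen \<pi> \<theta> d x u \<eta> t = chosen \<pi> \<theta> d x u \<eta>' t"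
  unfolding chosen_def using hist_adapt by metis

lemma hist_coupling:
  fixes N T :: nat
  assumes sub: "\<And>t \<eta>. t < T \<Longrightarrow> chosen \<pi> \<theta>' d x u \<eta> t \<subseteq> {..<N}"
    and c_def: "\<And>p. c p = mean_reward \<theta> d x (fst p) (snd p) - mean_reward \<theta>' d x (fst p) (snd p)"
    and t: "t \<le> T"
  shows "hist \<pi> \<theta> d x u (shiftJ ({..<T} \<times> {..<N}) (bsel (\<lambda>\<eta> t. chosen \<pi> \<theta>' d x u \<eta> t)) c \<eta>) t
       = hist \<pi> \<theta>' d x u \<eta> t"
  using t
proof (induction t)
  case 0 then show ?case by simp
next
  case (Suc t)
  let ?Psi = "shiftJ ({..<T} \<times> {..<N}) (bsel (\<lambda>\<eta> t. chosen \<pi> \<theta>' d x u \<eta> t)) c \<eta>"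
  have IH: "hist \<pi> \<theta> d x u ?Psi t = hist \<pi> \<theta>' d x u \<eta> t" using Suc by simp
  have tT: "t < T" using Suc.prems by simp
  define I where "I = \<pi> u t (hist \<pi> \<theta>' d x u \<eta> t)"
  have I_ch: "I = chosen \<pi> \<theta>' d x u \<eta> t" unfolding I_def chosen_def ..
  have obs: "(\<lambda>i. if i \<in> I then mean_reward \<theta> d x t i + ?Psi (t, i) else 0)
     = (\<lambda>i. if i \<in> I then mean_reward \<theta>' d x t i + \<eta> (t, i) else 0)"
  proof
    fix i
    show "(if i \<in> I then mean_reward \<theta> d x t i + ?Psi (t, i) else 0) = (if i \<in> I then mean_reward \<theta>' d x t i + \<eta> (t, i) else 0)"
    proof (cases "i \<in> I")
      case True
      then have "i < N" using sub[OF tT, of \<eta>] I_ch by auto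
      then have "?Psi (t,i) = \<eta> (t,i) - c (t,i)"
        using True tT I_ch by (simp add: shiftJ_def bsel_def)
      then show ?thesis using True c_def[of "(t,i)"] by simp
    qed simp
  qed
  show ?case using IH obs by (simp add: Let_def I_def)
qed


lemma Lam_meas:
  assumes S_meas: "\<And>t. t < T \<Longrightarrow> (\<lambda>\<eta>. S \<eta> t) \<in> measurable (PiM ({..<T} \<times> {..<N}) (\<lambda>_. gauss R)) (count_space UNIV)"
    and n: "n \<le> T"
  shows "Lam R N S c n \<in> borel_measurable (PiM ({..<T} \<times> {..<N}) (\<lambda>_. gauss R))"
  unfolding Lam_def[abs_def]
proof (rule borel_measurable_prod)
  fix t assume "t \<in> {..<n}"
  then have t: "t < T" using n by auto
  show "rhoJ R ({t} \<times> {..<N}) (bsel S) c \<in> borel_measurable (PiM ({..<T} \<times> {..<N}) (\<lambda>_. gauss R))"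
    by (rule rhoJ_meas) (use t bsel_meas[OF S_meas] in auto)
qed

lemma Lam_sq:
  assumes R: "R > 0"
    and S: "\<And>t. t < T \<Longrightarrow> S \<eta> t \<subseteq> {..<N} \<and> card (S \<eta> t) = k"
    and cD: "\<And>t i. t < T \<Longrightarrow> i < N \<Longrightarrow> (c (t,i))^2 = D"
  shows "(Lam R N S c T \<eta>)^2 = Lam R N S (\<lambda>p. 2 * c p) T \<eta> * exp (D/R^2) ^ (k*T)"
proof -
  let ?e = "exp (D/R^2)"
  have rho: "(rhoJ R ({t} \<times> {..<N}) (bsel S) c \<eta>)^2 = rhoJ R ({t} \<times> {..<N}) (bsel S) (\<lambda>p. 2 * c p) \<eta> * ?e ^ k"
    if t: "t < T" for t
  proof -
    have fp: "(if bsel S p \<eta> then exp ((2 * c p * \<eta> p - (c p)^2)/(2*R^2)) else 1)^2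
       = (if bsel S p \<eta> then exp ((2 * (2 * c p) * \<eta> p - (2 * c p)^2)/(2*R^2)) else 1) * (if bsel S p \<eta> then ?e else 1)"
      if p: "p \<in> {t} \<times> {..<N}" for p
    proof (cases "bsel S p \<eta>")
      case True
      have cp: "(c p)^2 = D" using cD[OF t, of "snd p"] p by auto
      have "(exp ((2 * c p * \<eta> p - (c p)^2)/(2*R^2)))^2 = exp (2 * ((2 * c p * \<eta> p - (c p)^2)/(2*R^2)))"
        by (simp only: exp_double)
      also have "2 * ((2 * c p * \<eta> p - (c p)^2)/(2*R^2)) = (2 * (2 * c p) * \<eta> p - (2 * c p)^2)/(2*R^2) + D/R^2"
        using R cp by (simp add: field_simps power2_eq_square)
      finally show ?thesis using True by (simp add: exp_add)
    qed simp
    have "(rhoJ R ({t} \<times> {..<N}) (bsel S) c \<eta>)^2 = (\<Prod>p\<in>{t} \<times> {..<N}. (if bsel S p \<eta> then exp ((2 * c p * \<eta> p - (c p)^2)/(2*R^2)) else 1)^2)"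
      unfolding rhoJ_def by (rule prod_power_distrib)
    also have "\<dots> = rhoJ R ({t} \<times> {..<N}) (bsel S) (\<lambda>p. 2 * c p) \<eta> * (\<Prod>p\<in>{t} \<times> {..<N}. if bsel S p \<eta> then ?e else 1)"
      unfolding rhoJ_def prod.distrib[symmetric] by (rule prod.cong[OF refl fp])
    also have "(\<Prod>p\<in>{t} \<times> {..<N}. if bsel S p \<eta> then ?e else 1) = (\<Prod>p\<in>{p \<in> {t} \<times> {..<N}. bsel S p \<eta>}. ?e)"
      by (rule prod.inter_filter[symmetric]) simp
    also have "{p \<in> {t} \<times> {..<N}. bsel S p \<eta>} = {t} \<times> S \<eta> t"
      using S[OF t] by (auto simp: bsel_def)
    also have "(\<Prod>p\<in>{t} \<times> S \<eta> t. ?e) = ?e ^ k"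
      using S[OF t] by (simp add: card_cartesian_product_singleton)
    finally show ?thesis .
  qed
  have "(Lam R N S c T \<eta>)^2 = (\<Prod>t<T. (rhoJ R ({t} \<times> {..<N}) (bsel S) c \<eta>)^2)"
    unfolding Lam_def by (rule prod_power_distrib)
  also have "\<dots> = (\<Prod>t<T. rhoJ R ({t} \<times> {..<N}) (bsel S) (\<lambda>p. 2 * c p) \<eta> * ?e ^ k)"
    by (rule prod.cong) (auto simp: rho)
  also have "\<dots> = Lam R N S (\<lambda>p. 2 * c p) T \<eta> * ?e ^ (k*T)"
    unfolding Lam_def prod.distrib by (simp add: power_mult)
  finally show ?thesis .
qed


lemma prob_space_P: "R > 0 \<Longrightarrow> prob_space (PiM I (\<lambda>_. gauss R))"
  by (rule prob_space_PiM) (rule prob_space_gauss)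

lemma bounded_integral_ennreal:
  assumes "prob_space M" and f: "f \<in> borel_measurable M" and "\<And>x. 0 \<le> f x" "\<And>x. f x \<le> 1"
  shows "(\<integral>\<^sup>+x. ennreal (f x) \<partial>M) = ennreal (integral\<^sup>L M f)" "integrable M f"
proof -
  interpret prob_space M by fact
  show int: "integrable M f"
    by (rule integrable_const_bound[where B=1]) (use assms in auto)
  show "(\<integral>\<^sup>+x. ennreal (f x) \<partial>M) = ennreal (integral\<^sup>L M f)"
    by (rule nn_integral_eq_integral[OF int]) (use assms in auto)
qed

lemma change_ineq:
  fixes R :: real and T N k :: nat and S :: "(nat \<times> nat \<Rightarrow> real) \<Rightarrow> nat \<Rightarrow> nat set" and c :: "nat \<times> nat \<Rightarrow> real"
  defines "P \<equiv> PiM ({..<T} \<times> {..<N}) (\<lambda>_. gauss R)"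
  assumes R: "R > 0"
    and S_adapt: "\<And>t \<eta> \<eta>'. (\<And>s i. s < t \<Longrightarrow> \<eta> (s,i) = \<eta>' (s,i)) \<Longrightarrow> S \<eta> t = S \<eta>' t"
    and S_meas: "\<And>t. t < T \<Longrightarrow> (\<lambda>\<eta>. S \<eta> t) \<in> measurable P (count_space UNIV)"
    and S: "\<And>t \<eta>. t < T \<Longrightarrow> S \<eta> t \<subseteq> {..<N} \<and> card (S \<eta> t) = k"
    and cD: "\<And>t i. t < T \<Longrightarrow> i < N \<Longrightarrow> (c (t,i))^2 = D"
    and E0: "E0 = exp (D/R^2) ^ (k*T)"
    and f: "f \<in> borel_measurable P" "\<And>\<eta>. 0 \<le> f \<eta>" "\<And>\<eta>. f \<eta> \<le> 1"
    and g: "g \<in> borel_measurable P" "\<And>\<eta>. 0 \<le> g \<eta>" "\<And>\<eta>. g \<eta> \<le> 1"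
    and coup: "\<And>\<eta>. f (shiftJ ({..<T} \<times> {..<N}) (bsel S) c \<eta>) = g \<eta>"
  shows "integral\<^sup>L P f \<le> E0 / 2 * integral\<^sup>L P g + 1/2"
proof -
  interpret prob_space P unfolding P_def using prob_space_P[OF R] .
  have E0pos: "E0 > 0" using E0 by simp
  let ?L = "Lam R N S c T"
  let ?L2 = "Lam R N S (\<lambda>p. 2 * c p) T"
  have Lm: "?L \<in> borel_measurable P" unfolding P_def by (rule Lam_meas) (use S_meas in \<open>auto simp: P_def\<close>)
  have L2m: "?L2 \<in> borel_measurable P" unfolding P_def by (rule Lam_meas) (use S_meas in \<open>auto simp: P_def\<close>)
  have "(\<integral>\<^sup>+\<eta>. (\<lambda>_. 1::ennreal) (shiftJ ({..<T} \<times> {..<N}) (bsel S) (\<lambda>p. 2 * c p) \<eta>) * ennreal (?L2 \<eta>) \<partial>P) = integral\<^sup>N P (\<lambda>_. 1)"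
    unfolding P_def
    by (rule adaptive_shift[OF R S_adapt]) (use S_meas in \<open>auto simp: P_def\<close>)
  then have L2int: "(\<integral>\<^sup>+\<eta>. 1 * ennreal (?L2 \<eta>) \<partial>P) = 1" by (simp add: emeasure_space_1)
  have "(\<integral>\<^sup>+\<eta>. ennreal ((?L \<eta>)^2) \<partial>P) = (\<integral>\<^sup>+\<eta>. ennreal E0 * ennreal (?L2 \<eta>) \<partial>P)"
  proof (rule nn_integral_cong)
    fix \<eta>
    have "(?L \<eta>)^2 = ?L2 \<eta> * exp (D/R^2) ^ (k*T)"
      by (rule Lam_sq[OF R]) (use S cD in auto)
    then show "ennreal ((?L \<eta>)^2) = ennreal E0 * ennreal (?L2 \<eta>)"
      by (simp add: E0 ennreal_mult'[symmetric] Lam_pos less_imp_le mult.commute)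
  qed
  also have "\<dots> = ennreal E0 * (\<integral>\<^sup>+\<eta>. 1 * ennreal (?L2 \<eta>) \<partial>P)"
    using L2m by (simp add: nn_integral_cmult)
  also have "\<dots> = ennreal E0 * 1"
    using L2int by simp
  finally have Lsq: "(\<integral>\<^sup>+\<eta>. ennreal ((?L \<eta>)^2) \<partial>P) = ennreal E0 * 1" .
  have "(\<integral>\<^sup>+\<eta>. ennreal (f \<eta>) \<partial>P) = (\<integral>\<^sup>+\<eta>. ennreal (f (shiftJ ({..<T} \<times> {..<N}) (bsel S) c \<eta>)) * ennreal (?L \<eta>) \<partial>P)"
    unfolding P_def
    by (rule adaptive_shift[OF R S_adapt, symmetric]) (use S_meas f in \<open>auto simp: P_def\<close>)
  also have "\<dots> = (\<integral>\<^sup>+\<eta>. ennreal (g \<eta> * ?L \<eta>) \<partial>P)"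
    by (rule nn_integral_cong) (simp add: coup ennreal_mult g(2) Lam_pos less_imp_le)
  also have "\<dots> \<le> (\<integral>\<^sup>+\<eta>. ennreal (E0/2) * ennreal (g \<eta>) + ennreal (1/(2*E0)) * ennreal ((?L \<eta>)^2) \<partial>P)"
  proof (rule nn_integral_mono)
    fix \<eta>
    have "g \<eta> * ?L \<eta> \<le> E0/2 * g \<eta> + 1/(2*E0) * (?L \<eta>)^2"
    proof -
      have "0 \<le> (E0 * g \<eta> - ?L \<eta>)^2 / E0" using E0pos by simp
      then have "g \<eta> * ?L \<eta> \<le> E0/2 * (g \<eta>)^2 + 1/(2*E0) * (?L \<eta>)^2"
        using E0pos by (simp add: field_simps power2_eq_square)
      moreover have "(g \<eta>)^2 \<le> g \<eta>" using g(2,3)[of \<eta>] mult_left_le[of "g \<eta>" "g \<eta>"] by (simp add: power2_eq_square)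
      moreover have "E0/2 * (g \<eta>)^2 \<le> E0/2 * g \<eta>"
        by (rule mult_left_mono) (use calculation(2) E0pos in auto)
      ultimately show ?thesis by linarith
    qed
    then show "ennreal (g \<eta> * ?L \<eta>) \<le> ennreal (E0/2) * ennreal (g \<eta>) + ennreal (1/(2*E0)) * ennreal ((?L \<eta>)^2)"
      using E0pos g(2)[of \<eta>] by (simp add: ennreal_mult'[symmetric] ennreal_plus[symmetric] del: ennreal_plus)
  qed
  also have "\<dots> = ennreal (E0/2) * (\<integral>\<^sup>+\<eta>. ennreal (g \<eta>) \<partial>P) + ennreal (1/(2*E0)) * (\<integral>\<^sup>+\<eta>. ennreal ((?L \<eta>)^2) \<partial>P)"
    using g(1) Lm by (simp add: nn_integral_add nn_integral_cmult)
  also have "\<dots> = ennreal (E0/2) * (\<integral>\<^sup>+\<eta>. ennreal (g \<eta>) \<partial>P) + ennreal (1/(2*E0)) * (ennreal E0 * 1)"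
    by (simp only: Lsq)
  finally have ineq: "(\<integral>\<^sup>+\<eta>. ennreal (f \<eta>) \<partial>P) \<le> ennreal (E0/2) * (\<integral>\<^sup>+\<eta>. ennreal (g \<eta>) \<partial>P) + ennreal (1/(2*E0)) * (ennreal E0 * 1)" .
  have "ennreal (1/(2*E0)) * (ennreal E0 * 1) = ennreal (1/2)"
    using E0pos by (simp add: ennreal_mult'[symmetric])
  moreover have "(\<integral>\<^sup>+\<eta>. ennreal (f \<eta>) \<partial>P) = ennreal (integral\<^sup>L P f)"
    by (rule bounded_integral_ennreal) (use f prob_space_axioms in auto)
  moreover have "(\<integral>\<^sup>+\<eta>. ennreal (g \<eta>) \<partial>P) = ennreal (integral\<^sup>L P g)"
    by (rule bounded_integral_ennreal) (use g prob_space_axioms in auto)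
  moreover have gnn: "0 \<le> integral\<^sup>L P g" using g(2) by (simp add: integral_nonneg_AE)
  ultimately have "ennreal (integral\<^sup>L P f) \<le> ennreal (E0/2) * ennreal (integral\<^sup>L P g) + ennreal (1/2)"
    using ineq by metis
  also have "ennreal (E0/2) * ennreal (integral\<^sup>L P g) + ennreal (1/2) = ennreal (E0/2 * integral\<^sup>L P g + 1/2)"
  proof -
    have "ennreal (E0/2 * integral\<^sup>L P g + 1/2) = ennreal (E0/2 * integral\<^sup>L P g) + ennreal (1/2)"
      by (rule ennreal_plus) (use E0pos gnn in auto)
    moreover have "ennreal (E0/2 * integral\<^sup>L P g) = ennreal (E0/2) * ennreal (integral\<^sup>L P g)"
      by (rule ennreal_mult) (use E0pos gnn in auto)
    ultimately show ?thesis by simp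
  qed
  finally have "ennreal (integral\<^sup>L P f) \<le> ennreal (E0/2 * integral\<^sup>L P g + 1/2)" .
  then show ?thesis
    by (subst (asm) ennreal_le_iff) (use E0pos gnn in auto)
qed



lemma meas_count_any: "f \<in> measurable M (count_space UNIV) \<Longrightarrow> (\<lambda>\<omega>. (G :: _ \<Rightarrow> real) (f \<omega>)) \<in> borel_measurable M"
  by (rule measurable_compose[where f=f and N="count_space UNIV"]) auto

locale LB =
  fixes R :: real and d k T :: nat and x :: "nat \<Rightarrow> nat \<Rightarrow> nat \<Rightarrow> real"
    and U :: "real measure" and \<pi> :: "real \<Rightarrow> nat \<Rightarrow> history \<Rightarrow> nat set"
  assumes R: "R > 0" and d: "d > 0" and k: "k > 0" and T: "T > 0"
    and inst: "inst_features d k T x"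
    and U: "prob_space U"
    and feas: "\<And>u t h. \<pi> u t h \<in> feasible (k * 2^d) k"
    and meas: "\<And>\<theta> t. \<theta> \<in> Theta R d k T \<Longrightarrow> t < T \<Longrightarrow>
       (\<lambda>\<omega>. chosen \<pi> \<theta> d x (fst \<omega>) (snd \<omega>) t) \<in> measurable (sample_space U R T (k * 2^d)) (count_space UNIV)"
begin

abbreviation "N \<equiv> k * 2^d"
definition "\<Delta> = R / sqrt (real k * real T)"
abbreviation "P \<equiv> PiM ({..<T} \<times> {..<N}) (\<lambda>_. gauss R)"
abbreviation "\<Theta> \<equiv> Theta R d k T"

lemma Delta_pos: "\<Delta> > 0"
  unfolding \<Delta>_def using R k T by simp

lemma Delta_sq: "\<Delta>^2 = R^2 / (real k * real T)"
  unfolding \<Delta>_def using k T by (simp add: power_divide)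

lemma SS_eq: "sample_space U R T N = U \<Otimes>\<^sub>M P"
  unfolding sample_space_def gauss_def ..

lemma probP: "prob_space P" using prob_space_P[OF R] .

lemma xval:
  assumes t: "t < T" and i: "i < N" and j: "j < d"
  shows "x t i j = 1 \<or> x t i j = -1"
proof -
  let ?s = "i div 2^d" and ?v = "i mod 2^d"
  have s: "?s < k" using i by (simp add: less_mult_imp_div_less)
  have v: "?v \<in> {..<2^d}" by simp
  have eq: "i = ?s * 2^d + ?v" using div_mult_mod_eq[of i "2^d"] by linarith
  have "bij_betw (\<lambda>j. x t (?s * 2^d + j)) {..<2^d} (cube d)"
    using inst t s unfolding inst_features_def by blast
  then have "x t (?s * 2^d + ?v) \<in> cube d" using v by (rule bij_betw_apply)
  moreover have "x t i = x t (?s * 2^d + ?v)" using eq by (rule arg_cong)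
  ultimately have "x t i \<in> cube d" by simp
  then show ?thesis using j unfolding cube_def by auto
qed

lemma xsq: "t < T \<Longrightarrow> i < N \<Longrightarrow> j < d \<Longrightarrow> (x t i j)^2 = 1"
proof -
  assume a: "t < T" "i < N" "j < d"
  from xval[OF a] show ?thesis by (elim disjE) simp_all
qed

lemma ch_feas: "chosen \<pi> \<theta> d x u \<eta> t \<subseteq> {..<N} \<and> card (chosen \<pi> \<theta> d x u \<eta> t) = k"
proof -
  have "\<pi> u t (hist \<pi> \<theta> d x u \<eta> t) \<in> feasible N k" by (rule feas)
  then show ?thesis unfolding chosen_def feasible_def by blast
qed

lemma ch_finite: "finite (chosen \<pi> \<theta> d x u \<eta> t)"
  using ch_feas[of \<theta> u \<eta> t] finite_subset[of _ "{..<N}"] by blast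

lemma Theta_val: "\<theta> \<in> \<Theta> \<Longrightarrow> j < d \<Longrightarrow> \<theta> j = \<Delta> \<or> \<theta> j = - \<Delta>"
  unfolding Theta_def \<Delta>_def by auto

lemma Theta_flip: "\<theta> \<in> \<Theta> \<Longrightarrow> j < d \<Longrightarrow> \<theta>(j := - \<theta> j) \<in> \<Theta>"
  unfolding Theta_def by auto

lemma Theta_finite: "finite \<Theta>"
proof -
  have "\<Theta> \<subseteq> {f. \<forall>j. (j \<in> {..<d} \<longrightarrow> f j \<in> {\<Delta>, -\<Delta>}) \<and> (j \<notin> {..<d} \<longrightarrow> f j = 0)}"
    unfolding Theta_def \<Delta>_def by auto
  moreover have "finite {f. \<forall>j. (j \<in> {..<d} \<longrightarrow> f j \<in> {\<Delta>, -\<Delta>}) \<and> (j \<notin> {..<d} \<longrightarrow> f j = (0::real))}"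
    by (rule finite_set_of_finite_funs) auto
  ultimately show ?thesis by (rule finite_subset)
qed

lemma Theta_ne: "(\<lambda>j. if j < d then \<Delta> else 0) \<in> \<Theta>"
  unfolding Theta_def \<Delta>_def by auto

lemma measP:
  assumes "\<theta> \<in> \<Theta>" "t < T" "u \<in> space U"
  shows "(\<lambda>\<eta>. chosen \<pi> \<theta> d x u \<eta> t) \<in> measurable P (count_space UNIV)"
proof -
  have "(\<lambda>\<omega>. chosen \<pi> \<theta> d x (fst \<omega>) (snd \<omega>) t) \<in> measurable (U \<Otimes>\<^sub>M P) (count_space UNIV)"
    using meas[OF assms(1,2)] unfolding SS_eq .
  from measurable_compose[OF measurable_Pair1'[OF assms(3)] this] show ?thesis by simp
qed

lemma cval:
  assumes th: "\<theta> \<in> \<Theta>" and j0: "j0 < d" and t: "t < T" and i: "i < N"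
  shows "(mean_reward \<theta> d x t i - mean_reward (\<theta>(j0 := - \<theta> j0)) d x t i)^2 = 4 * \<Delta>^2"
proof -
  have "mean_reward \<theta> d x t i - mean_reward (\<theta>(j0 := - \<theta> j0)) d x t i
      = (\<Sum>j<d. (if j = j0 then 2 * \<theta> j0 * x t i j0 else 0))"
    unfolding mean_reward_def sum_subtractf[symmetric]
    by (rule sum.cong) (auto simp: algebra_simps)
  also have "\<dots> = 2 * \<theta> j0 * x t i j0" using j0 by simp
  finally have "(mean_reward \<theta> d x t i - mean_reward (\<theta>(j0 := - \<theta> j0)) d x t i)^2 = 4 * (\<theta> j0)^2 * (x t i j0)^2"
    by (simp add: power_mult_distrib)
  also have "\<dots> = 4 * \<Delta>^2"
    using xsq[OF t i j0] Theta_val[OF th j0] by auto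
  finally show ?thesis .
qed

lemma E0_eq: "exp (4 * \<Delta>^2 / R^2) ^ (k * T) = exp 4"
proof -
  have "exp (4 * \<Delta>^2 / R^2) ^ (k * T) = exp (real (k * T) * (4 * \<Delta>^2 / R^2))"
    by (rule exp_of_nat_mult[symmetric])
  also have "real (k * T) * (4 * \<Delta>^2 / R^2) = 4"
    using R k T by (simp add: Delta_sq field_simps)
  finally show ?thesis .
qed

lemma main_ineq:
  fixes G :: "nat set \<Rightarrow> real"
  assumes th: "\<theta> \<in> \<Theta>" and j0: "j0 < d" and u: "u \<in> space U" and t: "t < T"
    and G: "\<And>I. 0 \<le> G I" "\<And>I. G I \<le> 1"
  shows "(\<integral>\<eta>. G (chosen \<pi> \<theta> d x u \<eta> t) \<partial>P)
      \<le> exp 4 / 2 * (\<integral>\<eta>. G (chosen \<pi> (\<theta>(j0 := - \<theta> j0)) d x u \<eta> t) \<partial>P) + 1/2"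
proof -
  let ?th' = "\<theta>(j0 := - \<theta> j0)"
  have th': "?th' \<in> \<Theta>" using Theta_flip[OF th j0] .
  let ?S = "\<lambda>\<eta> t. chosen \<pi> ?th' d x u \<eta> t"
  let ?c = "\<lambda>p. mean_reward \<theta> d x (fst p) (snd p) - mean_reward ?th' d x (fst p) (snd p)"
  show ?thesis
  proof (rule change_ineq[where S="?S" and c="?c" and k=k and D="4 * \<Delta>^2"])
    show "R > 0" by (rule R)
    show "?S \<eta> t = ?S \<eta>' t" if "\<And>s i. s < t \<Longrightarrow> \<eta> (s,i) = \<eta>' (s,i)" for t \<eta> \<eta>'
      by (rule chosen_adapt) (use that in auto)
    show "(\<lambda>\<eta>. ?S \<eta> t) \<in> measurable P (count_space UNIV)" if "t < T" for t
      by (rule measP[OF th' that u])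
    show "?S \<eta> t \<subseteq> {..<N} \<and> card (?S \<eta> t) = k" for \<eta> t
      by (rule ch_feas)
    show "(?c (t, i))^2 = 4 * \<Delta>^2" if "t < T" "i < N" for t i
      using cval[OF th j0 that] by simp
    show "exp 4 = exp (4 * \<Delta>^2 / R^2) ^ (k * T)" using E0_eq by simp
    show "(\<lambda>\<eta>. G (chosen \<pi> \<theta> d x u \<eta> t)) \<in> borel_measurable P"
      by (rule meas_count_any[OF measP[OF th t u]])
    show "(\<lambda>\<eta>. G (?S \<eta> t)) \<in> borel_measurable P"
      by (rule meas_count_any[OF measP[OF th' t u]])
    show "0 \<le> G (chosen \<pi> \<theta> d x u \<eta> t)" "G (chosen \<pi> \<theta> d x u \<eta> t) \<le> 1"
      "0 \<le> G (?S \<eta> t)" "G (?S \<eta> t) \<le> 1" for \<eta> using G by auto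
    show "G (chosen \<pi> \<theta> d x u (shiftJ ({..<T} \<times> {..<N}) (bsel ?S) ?c \<eta>) t) = G (?S \<eta> t)" for \<eta>
    proof -
      have "hist \<pi> \<theta> d x u (shiftJ ({..<T} \<times> {..<N}) (bsel ?S) ?c \<eta>) t = hist \<pi> ?th' d x u \<eta> t"
        by (rule hist_coupling) (use ch_feas t in auto)
      then show ?thesis unfolding chosen_def by simp
    qed
  qed
qed

definition wr :: "(nat \<Rightarrow> real) \<Rightarrow> nat \<Rightarrow> nat \<Rightarrow> nat set \<Rightarrow> real" where
  "wr \<theta> t j I = real (card {i \<in> I. \<theta> j * x t i j < 0})"

lemma wr_flip:
  assumes th: "\<theta> \<in> \<Theta>" and j0: "j0 < d" and t: "t < T" and I: "I \<subseteq> {..<N}" "card I = k"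
  shows "wr (\<theta>(j0 := - \<theta> j0)) t j0 I = real k - wr \<theta> t j0 I"
proof -
  have fin: "finite I" using I finite_subset by blast
  have nz: "\<theta> j0 * x t i j0 \<noteq> 0" if "i \<in> I" for i
    using Theta_val[OF th j0] xval[OF t _ j0, of i] that I Delta_pos by auto
  have "{i \<in> I. (\<theta>(j0 := - \<theta> j0)) j0 * x t i j0 < 0} = I - {i \<in> I. \<theta> j0 * x t i j0 < 0}"
  proof (rule set_eqI)
    fix i
    show "i \<in> {i \<in> I. (\<theta>(j0 := - \<theta> j0)) j0 * x t i j0 < 0} \<longleftrightarrow> i \<in> I - {i \<in> I. \<theta> j0 * x t i j0 < 0}"
    proof (cases "i \<in> I")
      case True
      then have nz': "\<theta> j0 * x t i j0 \<noteq> 0" by (rule nz)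
      have m: "(\<theta>(j0 := - \<theta> j0)) j0 * x t i j0 = - (\<theta> j0 * x t i j0)" by simp
      have 1: "i \<in> {i \<in> I. (\<theta>(j0 := - \<theta> j0)) j0 * x t i j0 < 0} \<longleftrightarrow> - (\<theta> j0 * x t i j0) < 0"
        using True m by simp
      have 2: "i \<in> I - {i \<in> I. \<theta> j0 * x t i j0 < 0} \<longleftrightarrow> \<not> (\<theta> j0 * x t i j0 < 0)" using True by simp
      have 3: "(- (\<theta> j0 * x t i j0) < 0) \<longleftrightarrow> \<not> (\<theta> j0 * x t i j0 < 0)" using nz' by linarith
      show ?thesis using 1 2 3 by blast
    qed simp
  qed
  then have "card {i \<in> I. (\<theta>(j0 := - \<theta> j0)) j0 * x t i j0 < 0} = card I - card {i \<in> I. \<theta> j0 * x t i j0 < 0}"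
    using fin by (simp add: card_Diff_subset)
  moreover have "card {i \<in> I. \<theta> j0 * x t i j0 < 0} \<le> card I"
    using fin by (intro card_mono) auto
  ultimately show ?thesis unfolding wr_def using I by (simp add: of_nat_diff)
qed

lemma wr_bounds:
  assumes "I \<subseteq> {..<N}" "card I = k"
  shows "0 \<le> wr \<theta> t j I" "wr \<theta> t j I \<le> real k"
proof -
  have fin: "finite I" using assms finite_subset by blast
  show "0 \<le> wr \<theta> t j I" unfolding wr_def by simp
  have "card {i \<in> I. \<theta> j * x t i j < 0} \<le> card I"
    using fin by (intro card_mono) auto
  then show "wr \<theta> t j I \<le> real k" unfolding wr_def using assms by simp
qed

definition c0 :: real where "c0 = 1 / (2 * exp 4)"

lemma pair_P:
  assumes th: "\<theta> \<in> \<Theta>" and j0: "j0 < d" and u: "u \<in> space U" and t: "t < T"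
  shows "(\<integral>\<eta>. wr \<theta> t j0 (chosen \<pi> \<theta> d x u \<eta> t) \<partial>P)
       + (\<integral>\<eta>. wr (\<theta>(j0 := - \<theta> j0)) t j0 (chosen \<pi> (\<theta>(j0 := - \<theta> j0)) d x u \<eta> t) \<partial>P) \<ge> real k * c0"
proof -
  interpret PP: prob_space P by (rule probP)
  let ?tf = "\<theta>(j0 := - \<theta> j0)"
  have tf: "?tf \<in> \<Theta>" using Theta_flip[OF th j0] .
  have hback: "?tf(j0 := - ?tf j0) = \<theta>" by (simp add: fun_eq_iff)
  define G :: "nat set \<Rightarrow> real" where "G = (\<lambda>I. if I \<subseteq> {..<N} \<and> card I = k then wr \<theta> t j0 I / real k else 0)"
  have G01: "0 \<le> G I" "G I \<le> 1" for I
    unfolding G_def using wr_bounds[of I \<theta> t j0] k by (auto simp: divide_simps)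
  have kpos: "real k > 0" using k by simp
  let ?A = "\<integral>\<eta>. G (chosen \<pi> \<theta> d x u \<eta> t) \<partial>P"
  let ?B = "\<integral>\<eta>. G (chosen \<pi> ?tf d x u \<eta> t) \<partial>P"
  have Bineq: "?B \<le> exp 4 / 2 * ?A + 1/2"
    using main_ineq[OF tf j0 u t, of G] G01 unfolding hback by simp
  have GmA: "(\<lambda>\<eta>. G (chosen \<pi> \<theta> d x u \<eta> t)) \<in> borel_measurable P"
    by (rule meas_count_any[OF measP[OF th t u]])
  have GmB: "(\<lambda>\<eta>. G (chosen \<pi> ?tf d x u \<eta> t)) \<in> borel_measurable P"
    by (rule meas_count_any[OF measP[OF tf t u]])
  have intB: "integrable P (\<lambda>\<eta>. G (chosen \<pi> ?tf d x u \<eta> t))"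
    by (rule bounded_integral_ennreal(2)[OF probP GmB]) (use G01 in auto)
  have A0: "?A \<ge> 0" using G01 by (simp add: integral_nonneg_AE)
  have B1: "?B \<le> 1"
  proof -
    have "?B \<le> (\<integral>\<eta>. 1 \<partial>P)"
      by (rule integral_mono[OF intB]) (use G01 in auto)
    then show ?thesis by (simp add: PP.prob_space)
  qed
  have eqA: "(\<integral>\<eta>. wr \<theta> t j0 (chosen \<pi> \<theta> d x u \<eta> t) \<partial>P) = real k * ?A"
  proof -
    have "(\<integral>\<eta>. wr \<theta> t j0 (chosen \<pi> \<theta> d x u \<eta> t) \<partial>P) = (\<integral>\<eta>. real k * G (chosen \<pi> \<theta> d x u \<eta> t) \<partial>P)"
      by (rule Bochner_Integration.integral_cong[OF refl]) (use ch_feas kpos in \<open>auto simp: G_def\<close>)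
    then show ?thesis by simp
  qed
  have eqB: "(\<integral>\<eta>. wr ?tf t j0 (chosen \<pi> ?tf d x u \<eta> t) \<partial>P) = real k * (1 - ?B)"
  proof -
    have "(\<integral>\<eta>. wr ?tf t j0 (chosen \<pi> ?tf d x u \<eta> t) \<partial>P) = (\<integral>\<eta>. real k * (1 - G (chosen \<pi> ?tf d x u \<eta> t)) \<partial>P)"
    proof (rule Bochner_Integration.integral_cong[OF refl])
      fix \<eta>
      have f: "chosen \<pi> ?tf d x u \<eta> t \<subseteq> {..<N}" "card (chosen \<pi> ?tf d x u \<eta> t) = k" using ch_feas by auto
      show "wr ?tf t j0 (chosen \<pi> ?tf d x u \<eta> t) = real k * (1 - G (chosen \<pi> ?tf d x u \<eta> t))"
      proof -
        have w: "wr ?tf t j0 (chosen \<pi> ?tf d x u \<eta> t) = real k - wr \<theta> t j0 (chosen \<pi> ?tf d x u \<eta> t)"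
          by (rule wr_flip[OF th j0 t f])
        have "real k * (1 - wr \<theta> t j0 (chosen \<pi> ?tf d x u \<eta> t) / real k) = real k - wr \<theta> t j0 (chosen \<pi> ?tf d x u \<eta> t)"
          using kpos by (simp add: right_diff_distrib)
        then show ?thesis using w f unfolding G_def by simp
      qed
    qed
    also have "\<dots> = real k * (\<integral>\<eta>. (1 - G (chosen \<pi> ?tf d x u \<eta> t)) \<partial>P)" by simp
    also have "(\<integral>\<eta>. (1 - G (chosen \<pi> ?tf d x u \<eta> t)) \<partial>P) = 1 - ?B"
      using intB by (simp add: Bochner_Integration.integral_diff PP.prob_space)
    finally show ?thesis .
  qed
  have e4: "exp (4::real) \<ge> 2"
    using exp_ge_add_one_self[of 4] by simp
  have "?A + (1 - ?B) \<ge> c0"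
  proof (cases "?A \<ge> c0")
    case True then show ?thesis using B1 by simp
  next
    case False
    then have "exp 4 * ?A < exp 4 * c0" by simp
    also have "exp 4 * c0 = 1/2" unfolding c0_def by simp
    finally have "1 - ?B \<ge> 1/4" using Bineq by simp
    moreover have "c0 \<le> 1/4" unfolding c0_def using e4 by (simp add: divide_simps)
    ultimately show ?thesis using A0 by simp
  qed
  then have "real k * (?A + (1 - ?B)) \<ge> real k * c0" using kpos by simp
  then show ?thesis unfolding eqA eqB by (simp add: algebra_simps)
qed

end


context LB begin

lemma feasible_finite: "finite (feasible N k)"
proof -
  have "feasible N k \<subseteq> Pow {..<N}" unfolding feasible_def by auto
  then show ?thesis by (rule finite_subset) simp
qed

lemma theta_abs: "\<theta> \<in> \<Theta> \<Longrightarrow> t < T \<Longrightarrow> i < N \<Longrightarrow> j < d \<Longrightarrow> \<theta> j * x t i j = \<Delta> \<or> \<theta> j * x t i j = - \<Delta>"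
  using Theta_val[of \<theta> j] xval[of t i j] by auto

lemma divaux: "v < (b::nat) \<Longrightarrow> (s * b + v) div b = s"
  by simp

lemma best_set:
  assumes th: "\<theta> \<in> \<Theta>" and t: "t < T"
  shows "\<exists>I\<in>feasible N k. (\<Sum>i\<in>I. mean_reward \<theta> d x t i) = real k * real d * \<Delta>"
proof -
  define sg where "sg = (\<lambda>j. if j < d then (if \<theta> j > 0 then 1 else -1) else (0::real))"
  have sgc: "sg \<in> cube d" unfolding sg_def cube_def by auto
  have ex: "\<exists>v. v < 2^d \<and> x t (s * 2^d + v) = sg" if s: "s < k" for s
  proof -
    have "bij_betw (\<lambda>j. x t (s * 2^d + j)) {..<2^d} (cube d)"
      using inst t s unfolding inst_features_def by blast
    then have "(\<lambda>j. x t (s * 2^d + j)) ` {..<2^d} = cube d" by (simp only: bij_betw_def)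
    then have "sg \<in> (\<lambda>j. x t (s * 2^d + j)) ` {..<2^d}" using sgc by simp
    then obtain v where "v \<in> {..<2^d}" "sg = x t (s * 2^d + v)" by (rule imageE)
    then show ?thesis by auto
  qed
  define v where "v = (\<lambda>s. SOME v. v < 2^d \<and> x t (s * 2^d + v) = sg)"
  have v: "v s < 2^d \<and> x t (s * 2^d + v s) = sg" if "s < k" for s
    unfolding v_def by (rule someI_ex[OF ex[OF that]])
  let ?f = "\<lambda>s. s * 2^d + v s"
  let ?I = "?f ` {..<k}"
  have inj: "inj_on ?f {..<k}"
  proof (rule inj_onI)
    fix s s' assume s: "s \<in> {..<k}" "s' \<in> {..<k}" and eq: "?f s = ?f s'"
    have a: "?f s div 2^d = s" using divaux[of "v s" "2^d" s] v[of s] s by simp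
    have b: "?f s' div 2^d = s'" using divaux[of "v s'" "2^d" s'] v[of s'] s by simp
    have "s = ?f s div 2^d" using a by simp
    also have "\<dots> = ?f s' div 2^d" using eq by (rule arg_cong)
    also have "\<dots> = s'" using b .
    finally show "s = s'" .
  qed
  have sub: "?I \<subseteq> {..<N}"
  proof
    fix i assume "i \<in> ?I"
    then obtain s where s: "s < k" "i = ?f s" by auto
    have "i < s * 2^d + 2^d" using v[OF s(1)] s(2) by simp
    also have "\<dots> = (s + 1) * 2^d" by simp
    also have "\<dots> \<le> k * 2^d" using s(1) by (intro mult_right_mono) auto
    finally show "i \<in> {..<N}" by simp
  qed
  have card: "card ?I = k" using card_image[OF inj] by simp
  have "(\<Sum>i\<in>?I. mean_reward \<theta> d x t i) = (\<Sum>s<k. mean_reward \<theta> d x t (?f s))"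
    using sum.reindex[OF inj] by simp
  also have "\<dots> = (\<Sum>s<k. real d * \<Delta>)"
  proof (rule sum.cong[OF refl])
    fix s assume s: "s \<in> {..<k}"
    have "mean_reward \<theta> d x t (?f s) = (\<Sum>j<d. \<theta> j * sg j)"
      unfolding mean_reward_def using v[of s] s by simp
    also have "\<dots> = (\<Sum>j<d. \<Delta>)"
    proof (rule sum.cong[OF refl])
      fix j assume j: "j \<in> {..<d}"
      have "\<theta> j = \<Delta> \<or> \<theta> j = - \<Delta>" using Theta_val[OF th] j by simp
      then show "\<theta> j * sg j = \<Delta>" using Delta_pos j by (auto simp: sg_def)
    qed
    finally show "mean_reward \<theta> d x t (?f s) = real d * \<Delta>" by simp
  qed
  also have "\<dots> = real k * real d * \<Delta>" by simp
  finally have val: "(\<Sum>i\<in>?I. mean_reward \<theta> d x t i) = real k * real d * \<Delta>" .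
  have "?I \<in> feasible N k" unfolding feasible_def using sub card by simp
  then show ?thesis using val by (rule bexI[rotated])
qed

lemma Max_ge:
  assumes th: "\<theta> \<in> \<Theta>" and t: "t < T"
  shows "Max ((\<lambda>I. \<Sum>i\<in>I. mean_reward \<theta> d x t i) ` feasible N k) \<ge> real k * real d * \<Delta>"
proof -
  obtain I where I: "I \<in> feasible N k" "(\<Sum>i\<in>I. mean_reward \<theta> d x t i) = real k * real d * \<Delta>"
    using best_set[OF th t] by blast
  show ?thesis
    by (rule Max_ge_iff[THEN iffD2]) (use feasible_finite I in \<open>auto intro!: bexI[of _ I]\<close>)
qed

lemma sum_abs_bound:
  assumes th: "\<theta> \<in> \<Theta>" and t: "t < T" and I: "I \<subseteq> {..<N}" "card I = k"
  shows "\<bar>\<Sum>i\<in>I. mean_reward \<theta> d x t i\<bar> \<le> real k * real d * \<Delta>"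
proof -
  have "\<bar>\<Sum>i\<in>I. mean_reward \<theta> d x t i\<bar> \<le> (\<Sum>i\<in>I. \<bar>mean_reward \<theta> d x t i\<bar>)" by (rule sum_abs)
  also have "\<dots> \<le> (\<Sum>i\<in>I. real d * \<Delta>)"
  proof (rule sum_mono)
    fix i assume i: "i \<in> I"
    have "\<bar>mean_reward \<theta> d x t i\<bar> \<le> (\<Sum>j<d. \<bar>\<theta> j * x t i j\<bar>)" unfolding mean_reward_def by (rule sum_abs)
    also have "\<dots> = (\<Sum>j<d. \<Delta>)"
    proof (rule sum.cong[OF refl])
      fix j assume j: "j \<in> {..<d}"
      have "\<theta> j * x t i j = \<Delta> \<or> \<theta> j * x t i j = - \<Delta>" using theta_abs[OF th t] i I j by auto
      then show "\<bar>\<theta> j * x t i j\<bar> = \<Delta>" using Delta_pos by auto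
    qed
    finally show "\<bar>mean_reward \<theta> d x t i\<bar> \<le> real d * \<Delta>" by simp
  qed
  also have "\<dots> = real k * real d * \<Delta>" using I by simp
  finally show ?thesis .
qed

lemma Max_abs:
  assumes th: "\<theta> \<in> \<Theta>" and t: "t < T"
  shows "\<bar>Max ((\<lambda>I. \<Sum>i\<in>I. mean_reward \<theta> d x t i) ` feasible N k)\<bar> \<le> real k * real d * \<Delta>"
proof -
  have ne: "feasible N k \<noteq> {}" using best_set[OF th t] by blast
  have "Max ((\<lambda>I. \<Sum>i\<in>I. mean_reward \<theta> d x t i) ` feasible N k) \<in> (\<lambda>I. \<Sum>i\<in>I. mean_reward \<theta> d x t i) ` feasible N k"
    by (rule Max_in) (use feasible_finite ne in auto)
  then obtain I where "I \<in> feasible N k" "Max ((\<lambda>I. \<Sum>i\<in>I. mean_reward \<theta> d x t i) ` feasible N k) = (\<Sum>i\<in>I. mean_reward \<theta> d x t i)"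
    by auto
  then show ?thesis using sum_abs_bound[OF th t] unfolding feasible_def by auto
qed

lemma round_lb:
  assumes th: "\<theta> \<in> \<Theta>" and t: "t < T" and I: "I \<subseteq> {..<N}" "card I = k"
  shows "real k * real d * \<Delta> - (\<Sum>i\<in>I. mean_reward \<theta> d x t i) = (\<Sum>j<d. 2 * \<Delta> * wr \<theta> t j I)"
proof -
  have fin: "finite I" using I finite_subset by blast
  have "real k * real d * \<Delta> - (\<Sum>i\<in>I. mean_reward \<theta> d x t i) = (\<Sum>i\<in>I. (\<Sum>j<d. \<Delta> - \<theta> j * x t i j))"
    using I by (simp add: mean_reward_def sum_subtractf)
  also have "\<dots> = (\<Sum>j<d. \<Sum>i\<in>I. \<Delta> - \<theta> j * x t i j)" by (rule sum.swap)
  also have "\<dots> = (\<Sum>j<d. 2 * \<Delta> * wr \<theta> t j I)"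
  proof (rule sum.cong[OF refl])
    fix j assume j: "j \<in> {..<d}"
    have "(\<Sum>i\<in>I. \<Delta> - \<theta> j * x t i j) = (\<Sum>i\<in>I. if \<theta> j * x t i j < 0 then 2 * \<Delta> else 0)"
    proof (rule sum.cong[OF refl])
      fix i assume i: "i \<in> I"
      have "\<theta> j * x t i j = \<Delta> \<or> \<theta> j * x t i j = - \<Delta>" using theta_abs[OF th t] i I j by auto
      then show "\<Delta> - \<theta> j * x t i j = (if \<theta> j * x t i j < 0 then 2 * \<Delta> else 0)" using Delta_pos by auto
    qed
    also have "\<dots> = (\<Sum>i\<in>{i \<in> I. \<theta> j * x t i j < 0}. 2 * \<Delta>)"
      by (rule sum.inter_filter[symmetric, OF fin])
    also have "\<dots> = 2 * \<Delta> * wr \<theta> t j I" unfolding wr_def by simp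
    finally show "(\<Sum>i\<in>I. \<Delta> - \<theta> j * x t i j) = 2 * \<Delta> * wr \<theta> t j I" .
  qed
  finally show ?thesis .
qed

lemma regret_lb:
  assumes th: "\<theta> \<in> \<Theta>"
  shows "regret \<pi> \<theta> d k x u \<eta> T \<ge> (\<Sum>t<T. \<Sum>j<d. 2 * \<Delta> * wr \<theta> t j (chosen \<pi> \<theta> d x u \<eta> t))"
  unfolding regret_def
proof (rule sum_mono)
  fix t assume t: "t \<in> {..<T}"
  have f: "chosen \<pi> \<theta> d x u \<eta> t \<subseteq> {..<N}" "card (chosen \<pi> \<theta> d x u \<eta> t) = k" using ch_feas by auto
  show "(\<Sum>j<d. 2 * \<Delta> * wr \<theta> t j (chosen \<pi> \<theta> d x u \<eta> t))
     \<le> Max ((\<lambda>I. \<Sum>i\<in>I. mean_reward \<theta> d x t i) ` feasible N k) - (\<Sum>i\<in>chosen \<pi> \<theta> d x u \<eta> t. mean_reward \<theta> d x t i)"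
  proof -
    have tT: "t < T" using t by simp
    show ?thesis using round_lb[OF th tT f] Max_ge[OF th tT] by linarith
  qed
qed

lemma regret_abs:
  assumes th: "\<theta> \<in> \<Theta>"
  shows "\<bar>regret \<pi> \<theta> d k x u \<eta> T\<bar> \<le> real T * (2 * (real k * real d * \<Delta>))"
proof -
  have "\<bar>regret \<pi> \<theta> d k x u \<eta> T\<bar> \<le> (\<Sum>t<T. \<bar>Max ((\<lambda>I. \<Sum>i\<in>I. mean_reward \<theta> d x t i) ` feasible N k) - (\<Sum>i\<in>chosen \<pi> \<theta> d x u \<eta> t. mean_reward \<theta> d x t i)\<bar>)"
    unfolding regret_def by (rule sum_abs)
  also have "\<dots> \<le> (\<Sum>t<T. 2 * (real k * real d * \<Delta>))"
  proof (rule sum_mono)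
    fix t assume t: "t \<in> {..<T}"
    have f: "chosen \<pi> \<theta> d x u \<eta> t \<subseteq> {..<N}" "card (chosen \<pi> \<theta> d x u \<eta> t) = k" using ch_feas by auto
    show "\<bar>Max ((\<lambda>I. \<Sum>i\<in>I. mean_reward \<theta> d x t i) ` feasible N k) - (\<Sum>i\<in>chosen \<pi> \<theta> d x u \<eta> t. mean_reward \<theta> d x t i)\<bar> \<le> 2 * (real k * real d * \<Delta>)"
    proof -
      have tT: "t < T" using t by simp
      show ?thesis using Max_abs[OF th tT] sum_abs_bound[OF th tT f] by linarith
    qed
  qed
  also have "\<dots> = real T * (2 * (real k * real d * \<Delta>))" by simp
  finally show ?thesis .
qed

end


context LB begin

lemma UP: "pair_prob_space U P"
  by (intro pair_prob_space.intro pair_sigma_finite.intro prob_space_imp_sigma_finite U probP)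

definition Wf :: "(nat \<Rightarrow> real) \<Rightarrow> nat \<Rightarrow> nat \<Rightarrow> real" where
  "Wf \<theta> t j = (\<integral>\<omega>. wr \<theta> t j (chosen \<pi> \<theta> d x (fst \<omega>) (snd \<omega>) t) \<partial>(U \<Otimes>\<^sub>M P))"

lemma wr_meas_SS:
  assumes "\<theta> \<in> \<Theta>" "t < T"
  shows "(\<lambda>\<omega>. wr \<theta> t j (chosen \<pi> \<theta> d x (fst \<omega>) (snd \<omega>) t)) \<in> borel_measurable (U \<Otimes>\<^sub>M P)"
  by (rule meas_count_any[OF meas[OF assms, unfolded SS_eq]])

lemma wr_int_SS:
  assumes "\<theta> \<in> \<Theta>" "t < T"
  shows "integrable (U \<Otimes>\<^sub>M P) (\<lambda>\<omega>. wr \<theta> t j (chosen \<pi> \<theta> d x (fst \<omega>) (snd \<omega>) t))"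
proof -
  interpret UP: pair_prob_space U P by (rule UP)
  show ?thesis
  proof (rule UP.integrable_const_bound[where B="real k"])
    show "AE \<omega> in U \<Otimes>\<^sub>M P. norm (wr \<theta> t j (chosen \<pi> \<theta> d x (fst \<omega>) (snd \<omega>) t)) \<le> real k"
      using wr_bounds ch_feas by (intro AE_I2) (simp add: abs_of_nonneg)
  qed (rule wr_meas_SS[OF assms])
qed

lemma W_fubini:
  assumes "\<theta> \<in> \<Theta>" "t < T"
  shows "Wf \<theta> t j = (\<integral>u. (\<integral>\<eta>. wr \<theta> t j (chosen \<pi> \<theta> d x u \<eta> t) \<partial>P) \<partial>U)"
    and "integrable U (\<lambda>u. \<integral>\<eta>. wr \<theta> t j (chosen \<pi> \<theta> d x u \<eta> t) \<partial>P)"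
proof -
  interpret UP: pair_prob_space U P by (rule UP)
  show "Wf \<theta> t j = (\<integral>u. (\<integral>\<eta>. wr \<theta> t j (chosen \<pi> \<theta> d x u \<eta> t) \<partial>P) \<partial>U)"
    unfolding Wf_def using UP.integral_fst'[OF wr_int_SS[OF assms, of j]] by simp
  show "integrable U (\<lambda>u. \<integral>\<eta>. wr \<theta> t j (chosen \<pi> \<theta> d x u \<eta> t) \<partial>P)"
    using UP.integrable_fst'[OF wr_int_SS[OF assms, of j]] by simp
qed

lemma pair_W:
  assumes th: "\<theta> \<in> \<Theta>" and j: "j < d" and t: "t < T"
  shows "Wf \<theta> t j + Wf (\<theta>(j := - \<theta> j)) t j \<ge> real k * c0"
proof -
  interpret U: prob_space U by (rule U)
  have th': "\<theta>(j := - \<theta> j) \<in> \<Theta>" by (rule Theta_flip[OF th j])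
  let ?a = "\<lambda>u. \<integral>\<eta>. wr \<theta> t j (chosen \<pi> \<theta> d x u \<eta> t) \<partial>P"
  let ?b = "\<lambda>u. \<integral>\<eta>. wr (\<theta>(j := - \<theta> j)) t j (chosen \<pi> (\<theta>(j := - \<theta> j)) d x u \<eta> t) \<partial>P"
  have ia: "integrable U ?a" by (rule W_fubini(2)[OF th t])
  have ib: "integrable U ?b" by (rule W_fubini(2)[OF th' t])
  have "Wf \<theta> t j + Wf (\<theta>(j := - \<theta> j)) t j = (\<integral>u. ?a u + ?b u \<partial>U)"
    unfolding W_fubini(1)[OF th t] W_fubini(1)[OF th' t] using ia ib by simp
  also have "\<dots> \<ge> (\<integral>u. real k * c0 \<partial>U)"
    by (rule integral_mono) (use ia ib pair_P[OF th j _ t] in auto)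
  finally show ?thesis by (simp add: U.prob_space)
qed

lemma regret_meas:
  assumes th: "\<theta> \<in> \<Theta>"
  shows "(\<lambda>\<omega>. regret \<pi> \<theta> d k x (fst \<omega>) (snd \<omega>) T) \<in> borel_measurable (U \<Otimes>\<^sub>M P)"
  unfolding regret_def
proof (rule borel_measurable_sum)
  fix t assume t: "t \<in> {..<T}"
  have "(\<lambda>\<omega>. (\<lambda>I. \<Sum>i\<in>I. mean_reward \<theta> d x t i) (chosen \<pi> \<theta> d x (fst \<omega>) (snd \<omega>) t)) \<in> borel_measurable (U \<Otimes>\<^sub>M P)"
    by (rule meas_count_any[OF meas[OF th, unfolded SS_eq]]) (use t in simp)
  then show "(\<lambda>\<omega>. Max ((\<lambda>I. \<Sum>i\<in>I. mean_reward \<theta> d x t i) ` feasible N k) - (\<Sum>i\<in>chosen \<pi> \<theta> d x (fst \<omega>) (snd \<omega>) t. mean_reward \<theta> d x t i)) \<in> borel_measurable (U \<Otimes>\<^sub>M P)"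
    by simp
qed

lemma ER_lb:
  assumes th: "\<theta> \<in> \<Theta>"
  shows "expected_regret U R \<pi> \<theta> d k x T \<ge> (\<Sum>t<T. \<Sum>j<d. 2 * \<Delta> * Wf \<theta> t j)"
proof -
  interpret UP: pair_prob_space U P by (rule UP)
  have ireg: "integrable (U \<Otimes>\<^sub>M P) (\<lambda>\<omega>. regret \<pi> \<theta> d k x (fst \<omega>) (snd \<omega>) T)"
  proof (rule UP.integrable_const_bound[where B="real T * (2 * (real k * real d * \<Delta>))"])
    show "AE \<omega> in U \<Otimes>\<^sub>M P. norm (regret \<pi> \<theta> d k x (fst \<omega>) (snd \<omega>) T) \<le> real T * (2 * (real k * real d * \<Delta>))"
      using regret_abs[OF th] by (intro AE_I2) simp
  qed (rule regret_meas[OF th])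
  have isum: "integrable (U \<Otimes>\<^sub>M P) (\<lambda>\<omega>. \<Sum>t<T. \<Sum>j<d. 2 * \<Delta> * wr \<theta> t j (chosen \<pi> \<theta> d x (fst \<omega>) (snd \<omega>) t))"
    using wr_int_SS[OF th] by (intro Bochner_Integration.integrable_sum integrable_mult_right) auto
  have "(\<Sum>t<T. \<Sum>j<d. 2 * \<Delta> * Wf \<theta> t j) = (\<integral>\<omega>. (\<Sum>t<T. \<Sum>j<d. 2 * \<Delta> * wr \<theta> t j (chosen \<pi> \<theta> d x (fst \<omega>) (snd \<omega>) t)) \<partial>(U \<Otimes>\<^sub>M P))"
  proof -
    have "(\<integral>\<omega>. (\<Sum>t<T. \<Sum>j<d. 2 * \<Delta> * wr \<theta> t j (chosen \<pi> \<theta> d x (fst \<omega>) (snd \<omega>) t)) \<partial>(U \<Otimes>\<^sub>M P))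
        = (\<Sum>t<T. (\<integral>\<omega>. (\<Sum>j<d. 2 * \<Delta> * wr \<theta> t j (chosen \<pi> \<theta> d x (fst \<omega>) (snd \<omega>) t)) \<partial>(U \<Otimes>\<^sub>M P)))"
      using wr_int_SS[OF th] by (intro Bochner_Integration.integral_sum Bochner_Integration.integrable_sum integrable_mult_right) auto
    also have "\<dots> = (\<Sum>t<T. \<Sum>j<d. (\<integral>\<omega>. 2 * \<Delta> * wr \<theta> t j (chosen \<pi> \<theta> d x (fst \<omega>) (snd \<omega>) t) \<partial>(U \<Otimes>\<^sub>M P)))"
      using wr_int_SS[OF th] by (intro sum.cong refl Bochner_Integration.integral_sum integrable_mult_right) auto
    also have "\<dots> = (\<Sum>t<T. \<Sum>j<d. 2 * \<Delta> * Wf \<theta> t j)"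
      unfolding Wf_def by simp
    finally show ?thesis by simp
  qed
  also have "\<dots> \<le> (\<integral>\<omega>. regret \<pi> \<theta> d k x (fst \<omega>) (snd \<omega>) T \<partial>(U \<Otimes>\<^sub>M P))"
    by (rule integral_mono[OF isum ireg]) (rule regret_lb[OF th])
  also have "\<dots> = expected_regret U R \<pi> \<theta> d k x T"
    unfolding expected_regret_def SS_eq ..
  finally show ?thesis .
qed

end


context LB begin

lemma sum_W:
  assumes t: "t < T" and j: "j < d"
  shows "(\<Sum>\<theta>\<in>\<Theta>. Wf \<theta> t j) \<ge> real (card \<Theta>) * (real k * c0) / 2"
proof -
  define Tp where "Tp = {\<theta> \<in> \<Theta>. \<theta> j = \<Delta>}"
  define Tn where "Tn = {\<theta> \<in> \<Theta>. \<theta> j = - \<Delta>}"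
  define fl where "fl = (\<lambda>\<theta>::nat \<Rightarrow> real. \<theta>(j := - \<theta> j))"
  have fin: "finite Tp" "finite Tn" unfolding Tp_def Tn_def using Theta_finite by auto
  have un: "\<Theta> = Tp \<union> Tn" unfolding Tp_def Tn_def using Theta_val[OF _ j] by auto
  have dis: "Tp \<inter> Tn = {}" unfolding Tp_def Tn_def using Delta_pos by auto
  have flfl: "fl (fl \<theta>) = \<theta>" for \<theta> unfolding fl_def by (simp add: fun_eq_iff)
  have inj: "inj_on fl Tp" by (metis flfl inj_on_inverseI)
  have img: "fl ` Tp = Tn"
  proof
    show "fl ` Tp \<subseteq> Tn"
    proof (rule image_subsetI)
      fix \<theta> assume th: "\<theta> \<in> Tp"
      have "fl \<theta> \<in> \<Theta>" using th Theta_flip[of \<theta> j] j unfolding Tp_def fl_def by simp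
      moreover have "fl \<theta> j = - \<Delta>" using th unfolding Tp_def fl_def by simp
      ultimately show "fl \<theta> \<in> Tn" unfolding Tn_def by simp
    qed
    show "Tn \<subseteq> fl ` Tp"
    proof
      fix \<theta> assume th: "\<theta> \<in> Tn"
      have "fl \<theta> \<in> \<Theta>" using th Theta_flip[of \<theta> j] j unfolding Tn_def fl_def by simp
      moreover have "fl \<theta> j = \<Delta>" using th unfolding Tn_def fl_def by simp
      ultimately have "fl \<theta> \<in> Tp" unfolding Tp_def by simp
      moreover have "\<theta> = fl (fl \<theta>)" by (simp add: flfl)
      ultimately show "\<theta> \<in> fl ` Tp" by blast
    qed
  qed
  have "(\<Sum>\<theta>\<in>\<Theta>. Wf \<theta> t j) = (\<Sum>\<theta>\<in>Tp. Wf \<theta> t j) + (\<Sum>\<theta>\<in>Tn. Wf \<theta> t j)"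
    unfolding un by (rule sum.union_disjoint[OF fin dis])
  also have "(\<Sum>\<theta>\<in>Tn. Wf \<theta> t j) = (\<Sum>\<theta>\<in>Tp. Wf (fl \<theta>) t j)"
    unfolding img[symmetric] by (rule sum.reindex[OF inj, unfolded comp_def])
  also have "(\<Sum>\<theta>\<in>Tp. Wf \<theta> t j) + (\<Sum>\<theta>\<in>Tp. Wf (fl \<theta>) t j) = (\<Sum>\<theta>\<in>Tp. Wf \<theta> t j + Wf (fl \<theta>) t j)"
    by (rule sum.distrib[symmetric])
  also have "\<dots> \<ge> (\<Sum>\<theta>\<in>Tp. real k * c0)"
  proof (rule sum_mono)
    fix \<theta> assume "\<theta> \<in> Tp"
    then have th: "\<theta> \<in> \<Theta>" unfolding Tp_def by simp
    show "real k * c0 \<le> Wf \<theta> t j + Wf (fl \<theta>) t j" unfolding fl_def by (rule pair_W[OF th j t])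
  qed
  finally have A: "(\<Sum>\<theta>\<in>\<Theta>. Wf \<theta> t j) \<ge> real (card Tp) * (real k * c0)" by simp
  have "card \<Theta> = card Tp + card Tn" unfolding un by (rule card_Un_disjoint[OF fin dis])
  also have "card Tn = card Tp" unfolding img[symmetric] by (rule card_image[OF inj])
  finally have "real (card \<Theta>) = 2 * real (card Tp)" by simp
  then show ?thesis using A by simp
qed

lemma final_exists:
  "\<exists>\<theta>\<in>\<Theta>. expected_regret U R \<pi> \<theta> d k x T \<ge> c0 * R * real d * sqrt (real k * real T)"
proof (rule ccontr)
  let ?V = "c0 * R * real d * sqrt (real k * real T)"
  assume "\<not> ?thesis"
  then have lt: "\<And>\<theta>. \<theta> \<in> \<Theta> \<Longrightarrow> expected_regret U R \<pi> \<theta> d k x T < ?V" by (simp add: not_le)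
  have ne: "\<Theta> \<noteq> {}" using Theta_ne by blast
  have "(\<Sum>\<theta>\<in>\<Theta>. expected_regret U R \<pi> \<theta> d k x T) < (\<Sum>\<theta>\<in>\<Theta>. ?V)"
    by (rule sum_strict_mono[OF Theta_finite ne lt])
  also have "\<dots> = real (card \<Theta>) * ?V" by simp
  finally have upper: "(\<Sum>\<theta>\<in>\<Theta>. expected_regret U R \<pi> \<theta> d k x T) < real (card \<Theta>) * ?V" .
  have "(\<Sum>\<theta>\<in>\<Theta>. expected_regret U R \<pi> \<theta> d k x T) \<ge> (\<Sum>\<theta>\<in>\<Theta>. \<Sum>t<T. \<Sum>j<d. 2 * \<Delta> * Wf \<theta> t j)"
    by (rule sum_mono) (rule ER_lb)
  also have "(\<Sum>\<theta>\<in>\<Theta>. \<Sum>t<T. \<Sum>j<d. 2 * \<Delta> * Wf \<theta> t j) = (\<Sum>t<T. \<Sum>j<d. 2 * \<Delta> * (\<Sum>\<theta>\<in>\<Theta>. Wf \<theta> t j))"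
    by (simp add: sum.swap[of _ \<Theta>] sum_distrib_left)
  also have "\<dots> \<ge> (\<Sum>t<T. \<Sum>j<d. 2 * \<Delta> * (real (card \<Theta>) * (real k * c0) / 2))"
    by (intro sum_mono mult_left_mono sum_W) (use Delta_pos in auto)
  finally have lower: "(\<Sum>\<theta>\<in>\<Theta>. expected_regret U R \<pi> \<theta> d k x T) \<ge> real T * real d * (\<Delta> * (real (card \<Theta>) * (real k * c0)))"
    by simp
  have "\<Delta> * (real k * real T) = R * sqrt (real k * real T)"
  proof -
    have "\<Delta> * (real k * real T) = R * ((real k * real T) / sqrt (real k * real T))"
      unfolding \<Delta>_def by simp
    also have "(real k * real T) / sqrt (real k * real T) = sqrt (real k * real T)"
      by (rule real_div_sqrt) simp
    finally show ?thesis .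
  qed
  then have "real T * real d * (\<Delta> * (real (card \<Theta>) * (real k * c0))) = real (card \<Theta>) * ?V"
    by (simp add: algebra_simps)
  then show False using upper lower by linarith
qed

end

theorem theorem5:
  shows "\<exists>c>0. \<forall>R>0. \<forall>d k T :: nat. d > 0 \<longrightarrow> k > 0 \<longrightarrow> T > 0 \<longrightarrow>
     (\<forall>x. inst_features d k T x \<longrightarrow>
       (\<forall>(U :: real measure) \<pi>. prob_space U \<longrightarrow>
          (\<forall>u t h. \<pi> u t h \<in> feasible (k * 2^d) k) \<longrightarrow>
          (\<forall>\<theta>\<in>Theta R d k T. \<forall>t<T.
              (\<lambda>\<omega>. chosen \<pi> \<theta> d x (fst \<omega>) (snd \<omega>) t)
                \<in> measurable (sample_space U R T (k * 2^d)) (count_space UNIV)) \<longrightarrow>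
          (\<exists>\<theta>\<in>Theta R d k T.
              expected_regret U R \<pi> \<theta> d k x T \<ge> c * R * real d * sqrt (real k * real T))))"
proof (rule exI[of _ "1 / (2 * exp 4)"], intro conjI allI impI)
  show "(0::real) < 1 / (2 * exp 4)" by simp
next
  fix R :: real and d k T :: nat and x :: "nat \<Rightarrow> nat \<Rightarrow> nat \<Rightarrow> real" and U :: "real measure"
    and \<pi> :: "real \<Rightarrow> nat \<Rightarrow> history \<Rightarrow> nat set"
  assume R: "R > 0" and d: "d > 0" and k: "k > 0" and T: "T > 0" and inst: "inst_features d k T x"
    and U: "prob_space U" and feas: "\<forall>u t h. \<pi> u t h \<in> feasible (k * 2^d) k"
    and meas: "\<forall>\<theta>\<in>Theta R d k T. \<forall>t<T.
              (\<lambda>\<omega>. chosen \<pi> \<theta> d x (fst \<omega>) (snd \<omega>) t)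
                \<in> measurable (sample_space U R T (k * 2^d)) (count_space UNIV)"
  interpret LB R d k T x U \<pi>
  proof (rule LB.intro[OF R d k T inst U])
    show "\<pi> u t h \<in> feasible (k * 2^d) k" for u t h using feas by blast
    show "(\<lambda>\<omega>. chosen \<pi> \<theta> d x (fst \<omega>) (snd \<omega>) t) \<in> measurable (sample_space U R T (k * 2^d)) (count_space UNIV)"
      if "\<theta> \<in> Theta R d k T" "t < T" for \<theta> t using meas that by blast
  qed
  show "\<exists>\<theta>\<in>Theta R d k T. expected_regret U R \<pi> \<theta> d k x T \<ge> 1 / (2 * exp 4) * R * real d * sqrt (real k * real T)"
    using final_exists unfolding c0_def .
qed

end
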